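(* Let $n$ be a power of two, and let $\mathcal{C}\subseteq\{0,1\}^n$ be a code as described in the context. There is a map $W$ assigning to each string $y\in\{0,1\}^{n-1}\cup\{0,1\}^n$ a set $W(y)\subseteq\{1,\dots,n\}$ with $|W(y)|\le 10^{10}\log^4 n$ such that for every $x\in\mathcal{C}$: (a) if $y$ is obtained from $x$ by one deletion, then $W(y)$ contains an index $p$ such that deleting $x_p$ from $x$ yields $y$; (b) if $y\neq x$ is obtained from $x$ by one adjacent transposition of positions $k,k+1$, then $k\in W(y)$.
   Context: Logarithms are base $2$. Set $\Delta=50+1000\log n$ and $m=1000\Delta^2$. Marker segmentation: for $x\in\{0,1\}^n$ ending in $0011$, write $x=z^x_1\|z^x_2\|\cdots\|z^x_{\ell_x}$ where each $z^x_j$ ends with $0011$ and contains exactly one occurrence of $0011$ as a substring (so $\ell_x$ is the number of occurrences of $0011$ in $x$). Let $h:\{0,1\}^{\le 3\Delta}\to\{0,\dots,m-1\}$ be a function such that $h(z)\ne h(z')$ whenever $z'\neq z$ is obtained from $z$ by at most two adjacent transpositions, or at most two substitutions, or at most one deletion together with at most one insertion. Define $f(x)=\sum_{j=1}^{\ell_x} j\,(|z^x_j|\cdot m+h(z^x_j)) \bmod (10n\Delta m+1)$, $g_1(x)=\ell_x\bmod 5$, $g_2(x)=\sum_{i=1}^n \overline{x}_i \bmod 3$ where $\overline{x}_i=\sum_{j=1}^i x_j \bmod 2$. For fixed $s_0,s_1,s_2$ let $\mathcal{C}'=\{x\in\{0,1\}^n: (x_{n-3},x_{n-2},x_{n-1},x_n)=(0,0,1,1),\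 f(x)=s_0,\ g_1(x)=s_1,\ g_2(x)=s_2,\ |z^x_j|\le\Delta \text{ for all } j\}$. The hash multiset of $x$ is $H_x=\{\{h(z^x_1),\dots,h(z^x_{\ell_x})\}\}$; for multisets, $|S\triangle T|=\sum_v|\mathrm{mult}_S(v)-\mathrm{mult}_T(v)|$. The code $\mathcal{C}$ is a subset of $\mathcal{C}'$ (for some $s_0,s_1,s_2$) such that for all $x,x'\in\mathcal{C}$, either $H_x=H_{x'}$ or $|H_x\triangle H_{x'}|\ge 10$. Deletion and adjacent transposition are as usual (a transposition swaps $x_k,x_{k+1}$). *)

theory Defs
  imports Complex_Main "HOL-Library.Multiset"
begin

(* Binary strings are bool lists; False = 0, True = 1; positions are 1-based. *)

definition Delta :: "nat \<Rightarrow> real" where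
  "Delta n = 50 + 1000 * log 2 (real n)"

definition mreal :: "nat \<Rightarrow> real" where
  "mreal n = 1000 * (Delta n)^2"

(* m and the modulus as natural numbers (exact when n is a power of two) *)
definition mnat :: "nat \<Rightarrow> nat" where
  "mnat n = nat \<lfloor>mreal n\<rfloor>"

definition fmod :: "nat \<Rightarrow> nat" where
  "fmod n = nat \<lfloor>10 * real n * Delta n * mreal n + 1\<rfloor>"

definition marker :: "bool list" where
  "marker = [False, False, True, True]"

definition marker_ends :: "bool list \<Rightarrow> nat list" where
  "marker_ends x = sorted_list_of_set
     {i. 4 \<le> i \<and> i \<le> length x \<and> drop (i - 4) (take i x) = marker}"

definition ell :: "bool list \<Rightarrow> nat" where
  "ell x = length (marker_ends x)"

definition segs :: "bool list \<Rightarrow> bool list list" where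
  "segs x = map2 (\<lambda>a b. drop a (take b x)) (0 # marker_ends x) (marker_ends x)"

definition f_sk :: "nat \<Rightarrow> (bool list \<Rightarrow> nat) \<Rightarrow> bool list \<Rightarrow> nat" where
  "f_sk n h x = (\<Sum>j = 1..ell x. j * (length (segs x ! (j - 1)) * mnat n + h (segs x ! (j - 1))))
                 mod fmod n"

definition g1 :: "bool list \<Rightarrow> nat" where
  "g1 x = ell x mod 5"

definition prefix_parity :: "bool list \<Rightarrow> nat \<Rightarrow> nat" where
  "prefix_parity x i = (\<Sum>j = 1..i. of_bool (x ! (j - 1))) mod 2"

definition g2 :: "bool list \<Rightarrow> nat" where
  "g2 x = (\<Sum>i = 1..length x. prefix_parity x i) mod 3"

definition Cprime :: "nat \<Rightarrow> (bool list \<Rightarrow> nat) \<Rightarrow> nat \<Rightarrow> nat \<Rightarrow> nat \<Rightarrow> bool list set" where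
  "Cprime n h s0 s1 s2 = {x. length x = n \<and> n \<ge> 4 \<and> drop (n - 4) x = marker
      \<and> f_sk n h x = s0 \<and> g1 x = s1 \<and> g2 x = s2
      \<and> (\<forall>z \<in> set (segs x). real (length z) \<le> Delta n)}"

definition hash_mset :: "(bool list \<Rightarrow> nat) \<Rightarrow> bool list \<Rightarrow> nat multiset" where
  "hash_mset h x = image_mset h (mset (segs x))"

definition mset_symdiff_size :: "'a multiset \<Rightarrow> 'a multiset \<Rightarrow> nat" where
  "mset_symdiff_size S T = size (S - T) + size (T - S)"

definition del_at :: "bool list \<Rightarrow> nat \<Rightarrow> bool list" where
  "del_at x p = take (p - 1) x @ drop p x"

definition ins_at :: "bool list \<Rightarrow> nat \<Rightarrow> bool \<Rightarrow> bool list" where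
  "ins_at x p b = take (p - 1) x @ b # drop (p - 1) x"

definition swap_at :: "bool list \<Rightarrow> nat \<Rightarrow> bool list" where
  "swap_at x k = x[k - 1 := x ! k, k := x ! (k - 1)]"

definition adj_trans_step :: "bool list \<Rightarrow> bool list \<Rightarrow> bool" where
  "adj_trans_step z z' \<longleftrightarrow> (\<exists>k. 1 \<le> k \<and> k < length z \<and> z' = swap_at z k)"

definition le2_adj_trans :: "bool list \<Rightarrow> bool list \<Rightarrow> bool" where
  "le2_adj_trans z z' \<longleftrightarrow> z' = z \<or> adj_trans_step z z'
      \<or> (\<exists>w. adj_trans_step z w \<and> adj_trans_step w z')"

definition hamming :: "bool list \<Rightarrow> bool list \<Rightarrow> nat" where
  "hamming z z' = card {i. i < length z \<and> z ! i \<noteq> z' ! i}"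

definition le2_subst :: "bool list \<Rightarrow> bool list \<Rightarrow> bool" where
  "le2_subst z z' \<longleftrightarrow> length z' = length z \<and> hamming z z' \<le> 2"

definition le1_del :: "bool list \<Rightarrow> bool list \<Rightarrow> bool" where
  "le1_del z w \<longleftrightarrow> w = z \<or> (\<exists>p. 1 \<le> p \<and> p \<le> length z \<and> w = del_at z p)"

definition le1_ins :: "bool list \<Rightarrow> bool list \<Rightarrow> bool" where
  "le1_ins w z' \<longleftrightarrow> z' = w \<or> (\<exists>p b. 1 \<le> p \<and> p \<le> length w + 1 \<and> z' = ins_at w p b)"

definition le1_del_ins :: "bool list \<Rightarrow> bool list \<Rightarrow> bool" where
  "le1_del_ins z z' \<longleftrightarrow> (\<exists>w. le1_del z w \<and> le1_ins w z')"

definition good_hash :: "nat \<Rightarrow> (bool list \<Rightarrow> nat) \<Rightarrow> bool" where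
  "good_hash n h \<longleftrightarrow>
     (\<forall>z. real (length z) \<le> 3 * Delta n \<longrightarrow> real (h z) \<le> mreal n - 1) \<and>
     (\<forall>z z'. real (length z) \<le> 3 * Delta n \<longrightarrow> real (length z') \<le> 3 * Delta n \<longrightarrow> z' \<noteq> z \<longrightarrow>
        (le2_adj_trans z z' \<or> le2_subst z z' \<or> le1_del_ins z z') \<longrightarrow> h z \<noteq> h z')"

definition is_code :: "nat \<Rightarrow> (bool list \<Rightarrow> nat) \<Rightarrow> bool list set \<Rightarrow> bool" where
  "is_code n h C \<longleftrightarrow> (\<exists>s0 s1 s2. C \<subseteq> Cprime n h s0 s1 s2) \<and>
     (\<forall>x \<in> C. \<forall>x' \<in> C. hash_mset h x = hash_mset h x' \<or>
         mset_symdiff_size (hash_mset h x) (hash_mset h x') \<ge> 10)"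

end

theory Submission
  imports Defs
begin


definition occ :: "bool list \<Rightarrow> nat \<Rightarrow> bool" where
  "occ x i \<longleftrightarrow> 4 \<le> i \<and> i \<le> length x \<and> \<not> x!(i-4) \<and> \<not> x!(i-3) \<and> x!(i-2) \<and> x!(i-1)"

lemma drop_take_four:
  assumes "4 \<le> i" "i \<le> length x"
  shows "drop (i-4) (take i x) = [x!(i-4), x!(i-3), x!(i-2), x!(i-1)]"
proof (rule nth_equalityI)
  show "length (drop (i-4) (take i x)) = length [x!(i-4), x!(i-3), x!(i-2), x!(i-1)]"
    using assms by simp
next
  fix k assume "k < length (drop (i-4) (take i x))"
  then have k: "k < 4" using assms by simp
  have "drop (i-4) (take i x) ! k = x ! (i-4+k)" using assms k by simp
  moreover have "[x!(i-4), x!(i-3), x!(i-2), x!(i-1)] ! k = x ! (i-4+k)"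
  proof -
    have e: "i-4+1 = i-3" "i-4+2 = i-2" "i-4+3 = i-1" using assms by auto
    have "k = 0 \<or> k = 1 \<or> k = 2 \<or> k = 3" using k by auto
    then show ?thesis using e by auto
  qed
  ultimately show "drop (i-4) (take i x) ! k = [x!(i-4), x!(i-3), x!(i-2), x!(i-1)] ! k" by simp
qed

lemma occ_iff: "(4 \<le> i \<and> i \<le> length x \<and> drop (i-4) (take i x) = marker) \<longleftrightarrow> occ x i"
proof (cases "4 \<le> i \<and> i \<le> length x")
  case True
  then show ?thesis unfolding occ_def marker_def using drop_take_four[of i x] by auto
qed (auto simp: occ_def)

lemma marker_ends_occ: "marker_ends x = sorted_list_of_set {i. occ x i}"
  unfolding marker_ends_def using occ_iff[of _ x] by (metis (no_types, lifting))

lemma finite_occ[simp]: "finite {i. occ x i}"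
  by (rule finite_subset[of _ "{..length x}"]) (auto simp: occ_def)

lemma occ_sep: assumes "occ x i" "occ x j" "i < j" shows "i + 4 \<le> j"
proof (rule ccontr)
  assume "\<not> i + 4 \<le> j"
  then have "j = i+1 \<or> j = i+2 \<or> j = i+3" using assms(3) by auto
  then show False using assms(1,2) unfolding occ_def
    by (auto simp: numeral_eq_Suc)
qed

definition bnd :: "bool list \<Rightarrow> bool" where
  "bnd P \<longleftrightarrow> P = [] \<or> occ P (length P)"

lemma occ_ge4: "occ x i \<Longrightarrow> 4 \<le> i" by (simp add: occ_def)
lemma occ_le: "occ x i \<Longrightarrow> i \<le> length x" by (simp add: occ_def)

lemma occ_take: "occ (take b x) i \<longleftrightarrow> occ x i \<and> i \<le> b"
  unfolding occ_def by auto

lemma occ_drop: "occ (drop a x) i \<longleftrightarrow> 4 \<le> i \<and> occ x (a+i)"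
proof -
  have e: "4 \<le> i \<Longrightarrow> a + i - 4 = a + (i - 4) \<and> a + i - 3 = a + (i-3) \<and> a + i - 2 = a + (i-2) \<and> a + i - 1 = a + (i - 1)"
    by auto
  show ?thesis unfolding occ_def using e by auto
qed

lemma occ_append:
  assumes "bnd P"
  shows "occ (P@Q) i \<longleftrightarrow> occ P i \<or> (length P + 4 \<le> i \<and> occ Q (i - length P))"
proof (cases "i \<le> length P")
  case True
  have "occ P i = occ (take (length P) (P@Q)) i" by simp
  then show ?thesis using True occ_take[of "length P" "P@Q" i] by auto
next
  case False
  show ?thesis
  proof (cases "length P + 4 \<le> i")
    case True
    have "occ Q (i - length P) = occ (drop (length P) (P@Q)) (i - length P)" by simp
    then show ?thesis using True False occ_drop[of "length P" "P@Q" "i - length P"] occ_le[of P i] by auto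
  next
    case F2: False
    have "\<not> occ (P@Q) i"
    proof
      assume o: "occ (P@Q) i"
      show False
      proof (cases "P = []")
        case True then show False using o F2 occ_ge4 by fastforce
      next
        case Fa: False
        then have "occ P (length P)" using assms bnd_def by auto
        then have "occ (P@Q) (length P)" using occ_take[of "length P" "P@Q"] by simp
        then show False using occ_sep[OF _ o] False F2 by force
      qed
    qed
    then show ?thesis using False F2 occ_le by fastforce
  qed
qed

lemma occ_set_append:
  assumes "bnd P"
  shows "{i. occ (P@Q) i} = {i. occ P i} \<union> (\<lambda>j. j + length P) ` {j. occ Q j}"
proof (rule set_eqI)
  fix i
  show "i \<in> {i. occ (P@Q) i} \<longleftrightarrow> i \<in> {i. occ P i} \<union> (\<lambda>j. j + length P) ` {j. occ Q j}"
  proof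
    assume "i \<in> {i. occ (P@Q) i}"
    then have "occ P i \<or> (length P + 4 \<le> i \<and> occ Q (i - length P))" using occ_append[OF assms] by auto
    then show "i \<in> {i. occ P i} \<union> (\<lambda>j. j + length P) ` {j. occ Q j}"
    proof
      assume h: "length P + 4 \<le> i \<and> occ Q (i - length P)"
      then have "i = (i - length P) + length P" by auto
      then show ?thesis using h by blast
    qed auto
  next
    assume "i \<in> {i. occ P i} \<union> (\<lambda>j. j + length P) ` {j. occ Q j}"
    then show "i \<in> {i. occ (P@Q) i}"
    proof
      assume "i \<in> (\<lambda>j. j + length P) ` {j. occ Q j}"
      then obtain j where "occ Q j" "i = j + length P" by auto
      then show ?thesis using occ_append[OF assms] occ_ge4[of Q j] by auto
    qed (auto simp: occ_append[OF assms])
  qed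
qed

lemma sls_union:
  assumes "finite A" "finite B" "\<forall>a\<in>A. \<forall>b\<in>B. a < b"
  shows "sorted_list_of_set (A \<union> B) = sorted_list_of_set A @ sorted_list_of_set (B::nat set)"
proof (rule sorted_distinct_set_unique)
  show "sorted (sorted_list_of_set A @ sorted_list_of_set B)"
    using assms by (auto simp: sorted_append less_imp_le)
  show "distinct (sorted_list_of_set A @ sorted_list_of_set B)"
    using assms by fastforce
qed (use assms in auto)

lemma sls_shift:
  assumes "finite B"
  shows "sorted_list_of_set ((\<lambda>j. j + c) ` B) = map (\<lambda>j. j + (c::nat)) (sorted_list_of_set B)"
proof (rule sorted_distinct_set_unique)
  show "sorted (map (\<lambda>j. j + c) (sorted_list_of_set B))"
    by (simp add: sorted_map)
  show "distinct (map (\<lambda>j. j + c) (sorted_list_of_set B))"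
    by (simp add: distinct_map)
qed (use assms in auto)

lemma marker_ends_append:
  assumes "bnd P"
  shows "marker_ends (P@Q) = marker_ends P @ map (\<lambda>j. j + length P) (marker_ends Q)"
  unfolding marker_ends_occ occ_set_append[OF assms]
proof -
  have "\<forall>a\<in>{i. occ P i}. \<forall>b\<in>(\<lambda>j. j + length P) ` {j. occ Q j}. a < b"
  proof (intro ballI)
    fix a b assume "a \<in> {i. occ P i}" "b \<in> (\<lambda>j. j + length P) ` {j. occ Q j}"
    then show "a < b" using occ_le[of P a] occ_ge4[of Q] by fastforce
  qed
  then show "sorted_list_of_set ({i. occ P i} \<union> (\<lambda>j. j + length P) ` {j. occ Q j}) =
    sorted_list_of_set {i. occ P i} @ map (\<lambda>j. j + length P) (sorted_list_of_set {i. occ Q i})"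
    by (subst sls_union) (auto simp: sls_shift)
qed

lemma marker_ends_last:
  assumes "bnd P"
  shows "last (0 # marker_ends P) = length P"
proof (cases "P = []")
  case True then show ?thesis by (simp add: marker_ends_occ occ_def)
next
  case False
  then have o: "occ P (length P)" using assms bnd_def by auto
  have "{i. occ P i} = ({i. occ P i} - {length P}) \<union> {length P}" using o by auto
  then have "marker_ends P = sorted_list_of_set ({i. occ P i} - {length P}) @ sorted_list_of_set {length P}"
    unfolding marker_ends_occ
  proof -
    assume e: "{i. occ P i} = ({i. occ P i} - {length P}) \<union> {length P}"
    have "\<forall>a\<in>{i. occ P i} - {length P}. \<forall>b\<in>{length P}. a < b"
      using occ_le[of P] by (force simp: not_less)
    then show "sorted_list_of_set {i. occ P i} = sorted_list_of_set ({i. occ P i} - {length P}) @ sorted_list_of_set {length P}"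
      by (subst e, intro sls_union) auto
  qed
  then show ?thesis by simp
qed

fun sg :: "bool list \<Rightarrow> nat \<Rightarrow> nat list \<Rightarrow> bool list list" where
  "sg x a [] = []"
| "sg x a (e#E) = drop a (take e x) # sg x e E"

lemma map2_sg: "map2 (\<lambda>a b. drop a (take b x)) (a # E) E = sg x a E"
  by (induction E arbitrary: a) auto

lemma segs_sg: "segs x = sg x 0 (marker_ends x)"
  unfolding segs_def by (rule map2_sg)

lemma sg_append: "sg x a (E1@E2) = sg x a E1 @ sg x (last (a#E1)) E2"
  by (induction E1 arbitrary: a) auto

lemma sg_take: "\<forall>e\<in>set E. e \<le> length P \<Longrightarrow> sg (P@Q) a E = sg P a E"
  by (induction E arbitrary: a) auto

lemma sg_drop: "sg (P@Q) (a + length P) (map (\<lambda>j. j + length P) E) = sg Q a E"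
proof (induction E arbitrary: a)
  case (Cons e E)
  have "take (e + length P) (P@Q) = P @ take e Q" by simp
  then have "drop (a + length P) (take (e + length P) (P@Q)) = drop a (take e Q)" by simp
  then show ?case using Cons by simp
qed simp

lemma segs_append:
  assumes "bnd P"
  shows "segs (P@Q) = segs P @ segs Q"
proof -
  have "segs (P@Q) = sg (P@Q) 0 (marker_ends P) @ sg (P@Q) (length P) (map (\<lambda>j. j + length P) (marker_ends Q))"
    unfolding segs_sg marker_ends_append[OF assms] sg_append marker_ends_last[OF assms] ..
  also have "sg (P@Q) 0 (marker_ends P) = segs P"
    unfolding segs_sg by (rule sg_take) (auto simp: marker_ends_occ occ_le)
  also have "sg (P@Q) (length P) (map (\<lambda>j. j + length P) (marker_ends Q)) = segs Q"
    using sg_drop[of P Q 0] by (simp add: segs_sg)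
  finally show ?thesis .
qed



lemma ell_segs: "ell x = length (segs x)"
  unfolding ell_def segs_def by simp

lemma sorted_sep_marker_ends: "sorted_wrt (\<lambda>u v. u + 4 \<le> v) (0 # marker_ends x)"
proof -
  have s: "sorted_wrt (<) (marker_ends x)" unfolding marker_ends_occ by simp
  have "sorted_wrt (\<lambda>u v. u + 4 \<le> v) (marker_ends x)"
    by (rule sorted_wrt_mono_rel[OF _ s]) (auto simp: marker_ends_occ intro: occ_sep)
  then show ?thesis by (auto simp: marker_ends_occ occ_ge4)
qed

lemma sg_lengths:
  assumes "sorted_wrt (\<lambda>u v. u + 4 \<le> v) (a # E)" "\<forall>e\<in>set E. e \<le> length x"
  shows "sum_list (map length (sg x a E)) = last (a # E) - a \<and> (\<forall>z\<in>set (sg x a E). 4 \<le> length z)"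
  using assms
proof (induction E arbitrary: a)
  case (Cons e E)
  then have "sorted_wrt (\<lambda>u v. u + 4 \<le> v) (e # E)" "a + 4 \<le> e" by auto
  moreover have "\<forall>f\<in>set E. e \<le> f" using Cons.prems by auto
  moreover have "last (e # E) \<ge> e" by (metis calculation(3) last_ConsL last_ConsR last_in_set order_refl)
  ultimately show ?case using Cons by auto
qed simp

lemma marker_ends_le: "\<forall>e\<in>set (marker_ends x). e \<le> length x"
  by (simp add: marker_ends_occ occ_le)

lemma segs_len_sum: "bnd x \<Longrightarrow> sum_list (map length (segs x)) = length x"
  using sg_lengths[OF sorted_sep_marker_ends marker_ends_le] marker_ends_last[of x]
  by (simp add: segs_sg)

lemma segs_len_ge4: "z \<in> set (segs x) \<Longrightarrow> 4 \<le> length z"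
  using sg_lengths[OF sorted_sep_marker_ends marker_ends_le] by (simp add: segs_sg)

lemma sum_list_ge: "(\<forall>z\<in>set L. c \<le> f z) \<Longrightarrow> c * length L \<le> sum_list (map f L)"
  by (induction L) auto

lemma ell_bound: "bnd x \<Longrightarrow> 4 * ell x \<le> length x"
  using sum_list_ge[of "segs x" 4 length] segs_len_ge4[of _ x] segs_len_sum[of x]
  by (simp add: ell_segs)

lemma segs_single: assumes "bnd x" "ell x = 1" shows "segs x = [x]"
proof -
  obtain e where e: "marker_ends x = [e]" using assms(2) unfolding ell_def
    by (metis One_nat_def length_0_conv length_Suc_conv)
  then have "e = length x" using marker_ends_last[OF assms(1)] by simp
  then show ?thesis using e by (simp add: segs_sg)
qed

lemma bnd_suffix: assumes "bnd (P@Q)" "bnd P" shows "bnd Q"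
proof (cases "Q = []")
  case False
  then have "occ (P@Q) (length (P@Q))" using assms(1) bnd_def by auto
  then have "occ P (length P + length Q) \<or> occ Q (length Q)" using occ_append[OF assms(2)] by auto
  then show ?thesis using False occ_le[of P] bnd_def by fastforce
qed (simp add: bnd_def)

lemma bnd_append: assumes "bnd P" "bnd Q" shows "bnd (P@Q)"
proof (cases "Q = []")
  case False
  then have "occ Q (length Q)" using assms(2) bnd_def by auto
  then have "occ (P@Q) (length (P@Q))" using occ_append[OF assms(1)] occ_ge4[of Q] by auto
  then show ?thesis by (simp add: bnd_def)
qed (use assms in simp)

lemma bnd_nonempty_ell: "bnd x \<Longrightarrow> x \<noteq> [] \<Longrightarrow> ell x \<ge> 1"
  unfolding ell_def marker_ends_occ bnd_def
  by (metis One_nat_def Suc_leI finite_occ length_sorted_list_of_set card_gt_0_iff empty_iff mem_Collect_eq)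

definition Tm :: "nat \<Rightarrow> (bool list \<Rightarrow> nat) \<Rightarrow> bool list \<Rightarrow> nat" where
  "Tm m h z = length z * m + h z"

definition Sl :: "nat \<Rightarrow> (bool list \<Rightarrow> nat) \<Rightarrow> bool list list \<Rightarrow> nat" where
  "Sl m h L = sum_list (map (Tm m h) L)"

fun Fl :: "nat \<Rightarrow> (bool list \<Rightarrow> nat) \<Rightarrow> bool list list \<Rightarrow> nat" where
  "Fl m h [] = 0"
| "Fl m h (z#L) = Tm m h z + Sl m h L + Fl m h L"

lemma Sl_append[simp]: "Sl m h (L1@L2) = Sl m h L1 + Sl m h L2"
  by (simp add: Sl_def)

lemma Sl_Cons[simp]: "Sl m h (z#L) = Tm m h z + Sl m h L" by (simp add: Sl_def)
lemma Sl_Nil[simp]: "Sl m h [] = 0" by (simp add: Sl_def)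

lemma Fl_append: "Fl m h (L1@L2) = Fl m h L1 + Fl m h L2 + length L1 * Sl m h L2"
  by (induction L1) (auto simp: algebra_simps)

lemma Fl_lessThan: "Fl m h L = (\<Sum>j<length L. (j+1) * Tm m h (L!j))"
proof (induction L)
  case (Cons z L)
  have "(\<Sum>j<length (z#L). (j+1) * Tm m h ((z#L)!j)) = Tm m h z + (\<Sum>j<length L. (j+2) * Tm m h (L!j))"
    unfolding length_Cons sum.lessThan_Suc_shift by (simp add: algebra_simps)
  also have "(\<Sum>j<length L. (j+2) * Tm m h (L!j)) = (\<Sum>j<length L. (j+1) * Tm m h (L!j)) + (\<Sum>j<length L. Tm m h (L!j))"
    by (simp add: sum.distrib[symmetric] algebra_simps)
  also have "(\<Sum>j<length L. Tm m h (L!j)) = Sl m h L"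
    unfolding Sl_def by (simp add: sum_list_sum_nth atLeast0LessThan)
  finally show ?case using Cons by simp
qed simp

lemma f_sk_Fl: "f_sk n h x = Fl (mnat n) h (segs x) mod fmod n"
proof -
  have "(\<Sum>j = 1..ell x. j * (length (segs x ! (j - 1)) * mnat n + h (segs x ! (j - 1))))
      = (\<Sum>j<ell x. (j+1) * Tm (mnat n) h (segs x ! j))"
    by (simp add: sum.atLeast1_atMost_eq Tm_def)
  then show ?thesis unfolding f_sk_def by (simp add: Fl_lessThan ell_segs)
qed

lemma Fl_le: "Fl m h L \<le> length L * Sl m h L"
proof (induction L)
  case (Cons z L)
  then show ?case by (simp add: algebra_simps)
qed simp

lemma Fl_single[simp]: "Fl m h [z] = Tm m h z" by simp

lemma Sl_split: "Sl m h L = m * sum_list (map length L) + sum_list (map h L)"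
  by (induction L) (auto simp: Tm_def algebra_simps)

lemma hash_mset_append: "bnd P \<Longrightarrow> hash_mset h (P@Q) = hash_mset h P + hash_mset h Q"
  by (simp add: hash_mset_def segs_append)

lemma size_hash: "size (hash_mset h x) = ell x"
  by (simp add: hash_mset_def ell_segs)

lemma sum_hash: "sum_mset (hash_mset h x) = sum_list (map h (segs x))"
  by (simp add: hash_mset_def sum_mset_sum_list[symmetric])



definition gcand :: "nat \<Rightarrow> (bool list \<Rightarrow> nat) \<Rightarrow> bool list set \<Rightarrow> bool list \<Rightarrow> nat \<Rightarrow>
   bool list \<Rightarrow> bool list \<Rightarrow> bool list \<Rightarrow> bool list \<Rightarrow> bool list \<Rightarrow> bool" where
  "gcand m h C y q x A M M' B \<longleftrightarrow> x \<in> C \<and> x = A@M@B \<and> y = A@M'@B \<and> bnd A \<and> M \<noteq> [] \<and> bnd M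
     \<and> M' \<noteq> [] \<and> bnd M' \<and> length A < q \<and> q \<le> length A + length M \<and> ell M + ell M' \<le> 4
     \<and> ((length M = length M' \<and> ell M \<le> 3 \<and> ell M' \<le> 3) \<or> (length M = length M' + 1 \<and> ell M \<le> 2 \<and> ell M' \<le> 2))
     \<and> (ell M = ell M' \<longrightarrow> ell M = 1 \<and> Tm m h M \<noteq> Tm m h M')"

definition goodC :: "nat \<Rightarrow> nat \<Rightarrow> nat \<Rightarrow> (bool list \<Rightarrow> nat) \<Rightarrow> bool list set \<Rightarrow> bool" where
  "goodC N D m h C \<longleftrightarrow> 0 < m \<and> (\<forall>z. length z \<le> 3*D \<longrightarrow> h z < m) \<and>
     (\<forall>x\<in>C. length x = N \<and> bnd x \<and> (\<forall>z\<in>set (segs x). length z \<le> D))"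

lemma sum_list_mono_bound: "(\<forall>z\<in>set L. f z \<le> c) \<Longrightarrow> sum_list (map f L) \<le> c * length L"
  by (induction L) auto

lemma member_le_sum_list_len: "z \<in> set L \<Longrightarrow> length z \<le> sum_list (map length L)"
  by (induction L) auto

lemma cand_facts:
  assumes g: "goodC N D m h C" and c: "gcand m h C y q x A M M' B"
  shows "segs x = segs A @ segs M @ segs B" "segs y = segs A @ segs M' @ segs B"
    "bnd y" "bnd B" "length M \<le> 3*D" "length M' \<le> 3*D" "ell M = 1 \<longrightarrow> length M \<le> D"
    "Fl m h (segs M) \<le> (9*D+9)*m" "Fl m h (segs M') \<le> (9*D+9)*m"
    "\<bar>int (Sl m h (segs M)) - int (Sl m h (segs M'))\<bar> < 3*int m"
    "Sl m h (segs y) \<le> 2*N*m" "ell y \<le> N"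
    "hash_mset h x + hash_mset h M' = hash_mset h y + hash_mset h M"
    "ell M \<ge> 1" "ell M' \<ge> 1"
    "int (Fl m h (segs x)) = int (Fl m h (segs y)) + (int (Fl m h (segs M)) - int (Fl m h (segs M')))
       + int (ell A) * (int (Sl m h (segs M)) - int (Sl m h (segs M')))
       + (int (ell M) - int (ell M')) * int (Sl m h (segs B))"
    "Sl m h (segs x) = m * N + sum_mset (hash_mset h x)"
    "Sl m h (segs y) = Sl m h (segs A) + Sl m h (segs M') + Sl m h (segs B)"
    "Sl m h (segs x) = Sl m h (segs A) + Sl m h (segs M) + Sl m h (segs B)"
    "ell x = ell A + ell M + ell B" "ell y = ell A + ell M' + ell B"
    "length x = N"
proof -
  have xC: "x \<in> C" and xe: "x = A@M@B" and ye: "y = A@M'@B" and bA: "bnd A" and bM: "bnd M"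
    and bM': "bnd M'" and Mne: "M \<noteq> []" and M'ne: "M' \<noteq> []"
    and ls: "ell M + ell M' \<le> 4"
    and lc: "(length M = length M' \<and> ell M \<le> 3 \<and> ell M' \<le> 3) \<or> (length M = length M' + 1 \<and> ell M \<le> 2 \<and> ell M' \<le> 2)"
    using c unfolding gcand_def by auto
  have m0: "0 < m" and hh: "\<And>z. length z \<le> 3*D \<Longrightarrow> h z < m" and xN: "length x = N" and bx: "bnd x"
    and xD: "\<forall>z\<in>set (segs x). length z \<le> D"
    using g xC unfolding goodC_def by auto
  show "length x = N" by (rule xN)
  have bAM: "bnd (A@M)" by (rule bnd_append[OF bA bM])
  show sx: "segs x = segs A @ segs M @ segs B"
    using xe segs_append[OF bA, of "M@B"] segs_append[OF bM, of B] by simp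
  show sy: "segs y = segs A @ segs M' @ segs B"
    using ye segs_append[OF bA, of "M'@B"] segs_append[OF bM', of B] by simp
  show bB: "bnd B" using bnd_suffix[of "A@M" B] bx xe bAM by simp
  show bY: "bnd y" using ye bnd_append[OF bA bnd_append[OF bM' bB]] by simp
  show e1: "ell M \<ge> 1" using bnd_nonempty_ell[OF bM Mne] .
  show e1': "ell M' \<ge> 1" using bnd_nonempty_ell[OF bM' M'ne] .
  have sMD: "\<forall>z\<in>set (segs M). length z \<le> D" using xD sx by auto
  have lenM: "length M = sum_list (map length (segs M))" using segs_len_sum[OF bM] by simp
  have "sum_list (map length (segs M)) \<le> D * ell M"
    using sum_list_mono_bound[of "segs M" length D] sMD by (simp add: ell_segs)
  then have lM: "length M \<le> D * ell M" using lenM by simp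
  have ellM3: "ell M \<le> 3" "ell M' \<le> 3" using lc by auto
  have "D * ell M \<le> D * 3" using ellM3 by simp
  then show lM3: "length M \<le> 3*D" using lM by linarith
  have "length M' \<le> length M" using lc by auto
  then show lM'3: "length M' \<le> 3*D" using lM3 by simp
  show "ell M = 1 \<longrightarrow> length M \<le> D" using lM by auto
  have hM: "\<forall>z\<in>set (segs M). h z \<le> m - 1"
  proof
    fix z assume "z \<in> set (segs M)"
    then have "length z \<le> 3*D" using member_le_sum_list_len[of z "segs M"] lenM lM3 by simp
    then show "h z \<le> m - 1" using hh by fastforce
  qed
  have lenM': "length M' = sum_list (map length (segs M'))" using segs_len_sum[OF bM'] by simp
  have hM': "\<forall>z\<in>set (segs M'). h z \<le> m - 1"
  proof
    fix z assume "z \<in> set (segs M')"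
    then have "length z \<le> 3*D" using member_le_sum_list_len[of z "segs M'"] lenM' lM'3 by simp
    then show "h z \<le> m - 1" using hh by fastforce
  qed
  have shM: "sum_list (map h (segs M)) \<le> (m-1) * ell M"
    using sum_list_mono_bound[OF hM] by (simp add: ell_segs)
  have shM': "sum_list (map h (segs M')) \<le> (m-1) * ell M'"
    using sum_list_mono_bound[OF hM'] by (simp add: ell_segs)
  have SM: "Sl m h (segs M) = m * length M + sum_list (map h (segs M))"
    using Sl_split lenM by simp
  have SM': "Sl m h (segs M') = m * length M' + sum_list (map h (segs M'))"
    using Sl_split lenM' by simp
  have "m * length M \<le> m * (3*D)" using lM3 by (rule mult_le_mono2)
  moreover have "(m-1) * ell M \<le> (m-1) * 3" using ellM3 by (intro mult_le_mono2) auto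
  ultimately have "Sl m h (segs M) \<le> m * (3*D) + (m-1)*3"
    using SM shM by linarith
  then have SMb: "Sl m h (segs M) \<le> (3*D+3)*m" using m0 by (simp add: algebra_simps; linarith)
  have "m * length M' \<le> m * (3*D)" using lM'3 by (rule mult_le_mono2)
  moreover have "(m-1) * ell M' \<le> (m-1) * 3" using ellM3 by (intro mult_le_mono2) auto
  ultimately have "Sl m h (segs M') \<le> m * (3*D) + (m-1)*3"
    using SM' shM' by linarith
  then have SMb': "Sl m h (segs M') \<le> (3*D+3)*m" using m0 by (simp add: algebra_simps; linarith)
  have "Fl m h (segs M) \<le> ell M * Sl m h (segs M)" using Fl_le ell_segs by metis
  also have "\<dots> \<le> 3 * ((3*D+3)*m)" using ellM3 SMb by (intro mult_le_mono) auto
  finally show "Fl m h (segs M) \<le> (9*D+9)*m" by (simp add: algebra_simps)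
  have "Fl m h (segs M') \<le> ell M' * Sl m h (segs M')" using Fl_le ell_segs by metis
  also have "\<dots> \<le> 3 * ((3*D+3)*m)" using ellM3 SMb' by (intro mult_le_mono) auto
  finally show "Fl m h (segs M') \<le> (9*D+9)*m" by (simp add: algebra_simps)
  show "\<bar>int (Sl m h (segs M)) - int (Sl m h (segs M'))\<bar> < 3*int m"
    using lc
  proof
    assume a: "length M = length M' \<and> ell M \<le> 3 \<and> ell M' \<le> 3"
    have "sum_list (map h (segs M)) \<le> (m-1)*3" using shM a by (meson le_trans mult_le_mono order_refl)
    moreover have "sum_list (map h (segs M')) \<le> (m-1)*3" using shM' a by (meson le_trans mult_le_mono order_refl)
    ultimately show ?thesis using SM SM' a m0 by (simp add: algebra_simps; linarith)
  next
    assume a: "length M = length M' + 1 \<and> ell M \<le> 2 \<and> ell M' \<le> 2"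
    have "sum_list (map h (segs M)) \<le> (m-1)*2" using shM a by (meson le_trans mult_le_mono order_refl)
    moreover have "sum_list (map h (segs M')) \<le> (m-1)*2" using shM' a by (meson le_trans mult_le_mono order_refl)
    ultimately show ?thesis using SM SM' a m0 by (simp add: algebra_simps; linarith)
  qed
  have ylen: "length y \<le> N" using xe ye xN lc by auto
  have ell_y: "ell y \<le> length y" using ell_bound[OF bY] by simp
  then show "ell y \<le> N" using ylen by simp
  have hy: "\<forall>z\<in>set (segs y). h z \<le> m - 1"
  proof
    fix z assume "z \<in> set (segs y)"
    then consider "z \<in> set (segs A)" | "z \<in> set (segs M')" | "z \<in> set (segs B)" using sy by auto
    then show "h z \<le> m - 1"
    proof cases
      case 1 then have "length z \<le> D" using xD sx by auto
      then show ?thesis using hh[of z] by fastforce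
    next
      case 2 then show ?thesis using hM' by auto
    next
      case 3 then have "length z \<le> D" using xD sx by auto
      then show ?thesis using hh[of z] by fastforce
    qed
  qed
  have "Sl m h (segs y) = m * length y + sum_list (map h (segs y))"
    using Sl_split segs_len_sum[OF bY] by simp
  also have "sum_list (map h (segs y)) \<le> (m-1) * ell y"
    using sum_list_mono_bound[OF hy] by (simp add: ell_segs)
  finally have "Sl m h (segs y) \<le> m * length y + (m-1) * ell y" by simp
  also have "\<dots> \<le> m * N + m * N" using ylen ell_y
    by (intro add_le_mono mult_le_mono) auto
  finally show "Sl m h (segs y) \<le> 2*N*m" by (simp add: algebra_simps)
  show "hash_mset h x + hash_mset h M' = hash_mset h y + hash_mset h M"
    by (simp add: hash_mset_def sx sy)
  show SLy: "Sl m h (segs y) = Sl m h (segs A) + Sl m h (segs M') + Sl m h (segs B)" by (simp add: sy)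
  show SLx: "Sl m h (segs x) = Sl m h (segs A) + Sl m h (segs M) + Sl m h (segs B)" by (simp add: sx)
  show "ell x = ell A + ell M + ell B" by (simp add: ell_segs sx)
  show "ell y = ell A + ell M' + ell B" by (simp add: ell_segs sy)
  show "Sl m h (segs x) = m * N + sum_mset (hash_mset h x)"
    using Sl_split segs_len_sum[OF bx] xN sum_hash by simp
  have Fx: "Fl m h (segs x) = Fl m h (segs A) + (Fl m h (segs M) + Fl m h (segs B) + ell M * Sl m h (segs B))
      + ell A * (Sl m h (segs M) + Sl m h (segs B))"
    by (simp add: sx Fl_append ell_segs)
  have Fy: "Fl m h (segs y) = Fl m h (segs A) + (Fl m h (segs M') + Fl m h (segs B) + ell M' * Sl m h (segs B))
      + ell A * (Sl m h (segs M') + Sl m h (segs B))"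
    by (simp add: sy Fl_append ell_segs)
  show "int (Fl m h (segs x)) = int (Fl m h (segs y)) + (int (Fl m h (segs M)) - int (Fl m h (segs M')))
       + int (ell A) * (int (Sl m h (segs M)) - int (Sl m h (segs M')))
       + (int (ell M) - int (ell M')) * int (Sl m h (segs B))"
    unfolding Fx Fy by (simp add: algebra_simps)
qed



lemma mset_diff_bound:
  fixes X Y P Q :: "'a multiset"
  assumes "X + P = Y + Q"
  shows "size (X - Y) \<le> size Q"
proof -
  have "X - Y \<subseteq># Q"
  proof (rule mset_subset_eqI)
    fix v
    have "count X v + count P v = count Y v + count Q v" using assms by (metis count_union)
    then show "count (X - Y) v \<le> count Q v" by simp
  qed
  then show ?thesis by (rule size_mset_mono)
qed

lemma prefix_ell_less:
  assumes "y = A1 @ R1" "y = A2 @ R2" "bnd A1" "bnd A2" "length A1 < length A2"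
  shows "ell A1 < ell A2"
proof -
  have t1: "take (length A1) y = A1" using assms(1) by simp
  have t2: "take (length A2) y = A2" using assms(2) by simp
  have "take (length A1) A2 = take (length A1) (take (length A2) y)" using t2 by simp
  also have "\<dots> = take (length A1) y" using assms(5) by (simp add: min_def)
  finally have "A1 = take (length A1) A2" using t1 by simp
  then have e: "A2 = A1 @ drop (length A1) A2" by (metis append_take_drop_id)
  have ne: "drop (length A1) A2 \<noteq> []" using assms(5) by simp
  have bW: "bnd (drop (length A1) A2)" using bnd_suffix[of A1 "drop (length A1) A2"] e assms(3,4) by simp
  have "ell A2 = ell A1 + ell (drop (length A1) A2)"
    using segs_append[OF assms(3), of "drop (length A1) A2"] e by (metis ell_segs length_append)
  then show ?thesis using bnd_nonempty_ell[OF bW ne] by simp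
qed

lemma congr_small:
  fixes a b fm :: nat
  assumes "a mod fm = b mod fm" "\<bar>int a - int b\<bar> < int fm"
  shows "a = b"
proof -
  have "int fm dvd (int a - int b)"
    using assms(1) by (metis mod_eq_dvd_iff of_nat_mod)
  show ?thesis
  proof (rule ccontr)
    assume "a \<noteq> b"
    then have "int a - int b \<noteq> 0" by simp
    from dvd_imp_le_int[OF this \<open>int fm dvd (int a - int b)\<close>] assms(2) show False by simp
  qed
qed

lemma pair_bound:
  assumes g: "goodC N D m h C"
    and code: "\<forall>x\<in>C. \<forall>x'\<in>C. hash_mset h x = hash_mset h x' \<or> mset_symdiff_size (hash_mset h x) (hash_mset h x') \<ge> 10"
    and fC: "\<forall>x\<in>C. Fl m h (segs x) mod fm = s0"
    and fmb: "7*N*m + (18*D+18)*m < fm"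
    and c1: "gcand m h C y q1 x1 A1 M1 M1' B1"
    and c2: "gcand m h C y q2 x2 A2 M2 M2' B2"
  shows "q2 \<le> q1 + 78*D + 108"
proof -
  note f1 = cand_facts[OF g c1]
  note f2 = cand_facts[OF g c2]
  have x1C: "x1 \<in> C" and x2C: "x2 \<in> C" using c1 c2 unfolding gcand_def by auto
  have m0: "0 < m" using g unfolding goodC_def by auto
  have q1: "length A1 < q1" "q1 \<le> length A1 + length M1" using c1 unfolding gcand_def by auto
  have q2: "length A2 < q2" "q2 \<le> length A2 + length M2" using c2 unfolding gcand_def by auto
  have ls1: "ell M1 + ell M1' \<le> 4" "ell M1 \<le> 3" "ell M1' \<le> 3" using c1 unfolding gcand_def by auto
  have ls2: "ell M2 + ell M2' \<le> 4" "ell M2 \<le> 3" "ell M2' \<le> 3" using c2 unfolding gcand_def by auto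
  define H1 where "H1 = hash_mset h x1"
  define H2 where "H2 = hash_mset h x2"
  have "H1 + (hash_mset h M1' + hash_mset h M2) = H2 + (hash_mset h M2' + hash_mset h M1)"
    using f1(13) f2(13) unfolding H1_def H2_def by (metis add.assoc add.commute)
  then have d12: "size (H1 - H2) \<le> ell M2' + ell M1"
    using mset_diff_bound size_hash by (metis size_union)
  have "H2 + (hash_mset h M2' + hash_mset h M1) = H1 + (hash_mset h M1' + hash_mset h M2)"
    using \<open>H1 + _ = _\<close> by simp
  then have d21: "size (H2 - H1) \<le> ell M1' + ell M2"
    using mset_diff_bound size_hash by (metis size_union)
  have "mset_symdiff_size H1 H2 < 10"
    unfolding mset_symdiff_size_def using d12 d21 ls1 ls2 by linarith
  then have Heq: "H1 = H2" using code x1C x2C unfolding H1_def H2_def by fastforce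
  have ellx: "ell x1 = ell x2" using Heq size_hash unfolding H1_def H2_def by metis
  have Slx: "Sl m h (segs x1) = Sl m h (segs x2)" using f1(17) f2(17) Heq unfolding H1_def H2_def by simp
  define a1 where "a1 = int (ell A1)"
  define a2 where "a2 = int (ell A2)"
  define d where "d = int (ell M1) - int (ell M1')"
  define K where "K = int (Sl m h (segs M1)) - int (Sl m h (segs M1'))"
  define G1 where "G1 = int (Fl m h (segs M1)) - int (Fl m h (segs M1'))"
  define G2 where "G2 = int (Fl m h (segs M2)) - int (Fl m h (segs M2'))"
  define b1 where "b1 = int (Sl m h (segs B1))"
  define b2 where "b2 = int (Sl m h (segs B2))"
  have d2: "d = int (ell M2) - int (ell M2')"
    using ellx f1(20,21) f2(20,21) unfolding d_def by linarith
  have K2: "K = int (Sl m h (segs M2)) - int (Sl m h (segs M2'))"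
    using Slx f1(18,19) f2(18,19) unfolding K_def by linarith
  have F1: "int (Fl m h (segs x1)) = int (Fl m h (segs y)) + G1 + a1 * K + d * b1"
    using f1(16) unfolding G1_def a1_def K_def d_def b1_def .
  have F2: "int (Fl m h (segs x2)) = int (Fl m h (segs y)) + G2 + a2 * K + d * b2"
    using f2(16) unfolding G2_def a2_def K2 d2 b2_def .
  have G1b: "\<bar>G1\<bar> \<le> int ((9*D+9)*m)" using f1(8,9) unfolding G1_def by linarith
  have G2b: "\<bar>G2\<bar> \<le> int ((9*D+9)*m)" using f2(8,9) unfolding G2_def by linarith
  have Kb: "\<bar>K\<bar> < 3 * int m" using f1(10) unfolding K_def .
  have a1b: "0 \<le> a1" "a1 \<le> int N" using f1(12) f1(21) unfolding a1_def by auto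
  have a2b: "0 \<le> a2" "a2 \<le> int N" using f2(12) f2(21) unfolding a2_def by auto
  have "Sl m h (segs B1) \<le> 2*N*m" using f1(11) f1(18) by linarith
  then have b1b: "0 \<le> b1" "b1 \<le> int (2*N*m)" unfolding b1_def of_nat_le_iff by auto
  have "Sl m h (segs B2) \<le> 2*N*m" using f2(11) f2(18) by linarith
  then have b2b: "0 \<le> b2" "b2 \<le> int (2*N*m)" unfolding b2_def of_nat_le_iff by auto
  have db: "\<bar>d\<bar> \<le> 2" using ls1 f1(14,15) unfolding d_def by linarith
  \<comment> \<open>f equality forces equality of the perturbations\<close>
  have t1: "\<bar>(a1 - a2) * K\<bar> \<le> int N * (3 * int m)"
    unfolding abs_mult using a1b a2b Kb by (intro mult_mono) auto
  have t2: "\<bar>d * (b1 - b2)\<bar> \<le> 2 * int (2*N*m)"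
    unfolding abs_mult using db b1b b2b by (intro mult_mono) auto
  have "\<bar>int (Fl m h (segs x1)) - int (Fl m h (segs x2))\<bar> = \<bar>(G1 - G2) + (a1 - a2) * K + d * (b1 - b2)\<bar>"
    unfolding F1 F2 by (simp add: algebra_simps)
  also have "\<dots> \<le> \<bar>G1\<bar> + \<bar>G2\<bar> + \<bar>(a1 - a2) * K\<bar> + \<bar>d * (b1 - b2)\<bar>" by linarith
  also have "\<dots> < int fm"
  proof -
    have "int (7*N*m + (18*D+18)*m) < int fm" using fmb by (simp only: of_nat_less_iff)
    then have "2 * int ((9*D+9)*m) + int N * (3 * int m) + 2 * int (2*N*m) < int fm"
      by (simp add: algebra_simps)
    then show ?thesis using G1b G2b t1 t2 by linarith
  qed
  finally have "Fl m h (segs x1) = Fl m h (segs x2)"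
    using congr_small fC x1C x2C by metis
  then have Phi: "G1 + a1 * K + d * b1 = G2 + a2 * K + d * b2" using F1 F2 by simp
  have lM1: "length M1 \<le> 3*D" "length M1' \<le> 3*D" "length M2 \<le> 3*D" using f1(5,6) f2(5) by auto
  show ?thesis
  proof (cases "d = 0")
    case True
    have e1: "ell M1 = ell M1'" using True unfolding d_def by simp
    have e2: "ell M2 = ell M2'" using True d2 by simp
    have s1: "ell M1 = 1" "Tm m h M1 \<noteq> Tm m h M1'" using c1 e1 unfolding gcand_def by auto
    have s2: "ell M2 = 1" using c2 e2 unfolding gcand_def by auto
    have bM1: "bnd M1" "bnd M1'" "bnd M2" "bnd M2'" using c1 c2 unfolding gcand_def by auto
    have sg1: "segs M1 = [M1]" "segs M1' = [M1']" using segs_single bM1 s1 e1 by auto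
    have sg2: "segs M2 = [M2]" "segs M2' = [M2']" using segs_single bM1 s2 e2 by auto
    have "G1 = K" unfolding G1_def K_def sg1 by simp
    moreover have "G2 = K" unfolding G2_def K2 sg2 by simp
    moreover have "K \<noteq> 0" unfolding K_def sg1 using s1(2) by simp
    ultimately have "(1 + a1) * K = (1 + a2) * K" using Phi True by (simp add: algebra_simps)
    then have "a1 = a2" using \<open>K \<noteq> 0\<close> by simp
    then have "ell A1 = ell A2" unfolding a1_def a2_def by simp
    moreover have yy: "y = A1 @ (M1' @ B1)" "y = A2 @ (M2' @ B2)" using c1 c2 unfolding gcand_def by auto
    moreover have "bnd A1" "bnd A2" using c1 c2 unfolding gcand_def by auto
    ultimately have "length A1 = length A2"
      using prefix_ell_less[of y A1 _ A2] prefix_ell_less[of y A2 _ A1] by (metis less_irrefl nat_neq_iff)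
    moreover have "length M2 \<le> D" using f2(7) s2 by simp
    ultimately show ?thesis using q1 q2 by linarith
  next
    case False
    show ?thesis
    proof (cases "length A1 + length M1' \<le> length A2")
      case False
      then show ?thesis using q1 q2 lM1 by linarith
    next
      case True
      define k where "k = length A1 + length M1'"
      define Mid where "Mid = drop k A2"
      have yy: "y = A1 @ M1' @ B1" "y = A2 @ M2' @ B2" using c1 c2 unfolding gcand_def by auto
      have bA: "bnd A1" "bnd A2" "bnd M1'" "bnd M2'" using c1 c2 unfolding gcand_def by auto
      have tk: "take k A2 = A1 @ M1'"
      proof -
        have "take k A2 = take k (take (length A2) y)" using yy(2) by simp
        also have "\<dots> = take k y" using True unfolding k_def by (simp add: min_def)
        also have "\<dots> = A1 @ M1'" using yy(1) unfolding k_def by simp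
        finally show ?thesis .
      qed
      have A2e: "A2 = (A1 @ M1') @ Mid" unfolding Mid_def using tk by (metis append_take_drop_id)
      have bAM: "bnd (A1 @ M1')" using bnd_append bA by auto
      have bMid: "bnd Mid" using bnd_suffix[OF _ bAM] A2e bA(2) by simp
      have "A1 @ M1' @ B1 = A1 @ M1' @ (Mid @ M2' @ B2)" using yy A2e by simp
      then have B1e: "B1 = Mid @ M2' @ B2" by simp
      have ellA2: "ell A2 = ell A1 + ell M1' + ell Mid"
        using A2e segs_append[OF bAM, of Mid] segs_append[OF bA(1), of M1'] by (simp add: ell_segs)
      have slB1: "Sl m h (segs B1) = Sl m h (segs Mid) + Sl m h (segs M2') + Sl m h (segs B2)"
        using B1e segs_append[OF bMid, of "M2' @ B2"] segs_append[OF bA(4), of B2] by simp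
      have SlMid: "m * length Mid \<le> Sl m h (segs Mid)"
        using Sl_split[of m h "segs Mid"] segs_len_sum[OF bMid] by simp
      have ellMid: "4 * ell Mid \<le> length Mid" using ell_bound[OF bMid] .
      define L where "L = int (length Mid)"
      define e where "e = int (ell Mid)"
      have a2e: "a2 = a1 + int (ell M1') + e" unfolding a2_def a1_def e_def using ellA2 by simp
      have bdiff: "b1 - b2 \<ge> int m * L"
      proof -
        have "int (m * length Mid) \<le> int (Sl m h (segs Mid))" using SlMid by (simp only: of_nat_le_iff)
        then show ?thesis unfolding b1_def b2_def L_def using slB1 by simp
      qed
      have L0: "0 \<le> L" unfolding L_def by simp
      have "d * (b1 - b2) = (G2 - G1) + (int (ell M1') + e) * K" using Phi a2e by (simp add: algebra_simps)
      then have "\<bar>d\<bar> * \<bar>b1 - b2\<bar> = \<bar>(G2 - G1) + (int (ell M1') + e) * K\<bar>" by (metis abs_mult)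
      moreover have "\<bar>b1 - b2\<bar> \<le> \<bar>d\<bar> * \<bar>b1 - b2\<bar>" using False by (simp add: mult_le_cancel_right1; linarith)
      moreover have "\<bar>(G2 - G1) + (int (ell M1') + e) * K\<bar> \<le> \<bar>G2\<bar> + \<bar>G1\<bar> + (int (ell M1') + e) * \<bar>K\<bar>"
        using abs_triangle_ineq[of "G2 - G1" "(int (ell M1') + e) * K"] unfolding abs_mult
        by (simp add: e_def; linarith)
      moreover have "(int (ell M1') + e) * \<bar>K\<bar> \<le> (3 + e) * (3 * int m)"
        using ls1 Kb unfolding e_def by (intro mult_mono) auto
      ultimately have main: "int m * L \<le> 2 * int ((9*D+9)*m) + (3 + e) * (3 * int m)"
        using bdiff G1b G2b L0 m0 by (smt (verit) mult_nonneg_nonneg of_nat_0_le_iff)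
      have "4 * ((3 + e) * (3 * int m)) = (12 + 4 * e) * (3 * int m)" by (simp add: algebra_simps)
      also have "\<dots> \<le> (12 + L) * (3 * int m)" using ellMid unfolding e_def L_def
        by (intro mult_right_mono) auto
      finally have "4 * (int m * L) \<le> 8 * int ((9*D+9)*m) + (12 + L) * (3 * int m)" using main by linarith
      then have "int m * L \<le> int m * (72 * int D + 108)" by (simp add: algebra_simps)
      then have "L \<le> 72 * int D + 108" using m0 by (simp add: mult_le_cancel_left)
      then have "length Mid \<le> 72 * D + 108" unfolding L_def by linarith
      moreover have "length A2 = length A1 + length M1' + length Mid" using A2e by simp
      ultimately show ?thesis using q1 q2 lM1 by linarith
    qed
  qed
qed



definition xb :: "bool list \<Rightarrow> nat \<Rightarrow> bool" where
  "xb x j = (if j = 0 then True else if j \<le> length x then x!(j-1) else False)"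

definition pat :: "(nat \<Rightarrow> bool) \<Rightarrow> nat \<Rightarrow> bool" where
  "pat c i \<longleftrightarrow> \<not> c (i-3) \<and> \<not> c (i-2) \<and> c (i-1) \<and> c i"

lemma occ_xb: "occ x i \<longleftrightarrow> i \<le> length x \<and> pat (xb x) i"
proof (cases "4 \<le> i")
  case True
  then have "i - 3 = (i-4) + 1" "i - 2 = (i-3) + 1" "i - 1 = (i-2)+1" by auto
  then show ?thesis using True unfolding occ_def pat_def xb_def by auto
next
  case False
  then have "i - 3 = 0" by auto
  then show ?thesis using False unfolding occ_def pat_def xb_def by auto
qed

lemma card_window5: fixes p :: nat shows
  "card {j. p \<le> j \<and> j \<le> p+4 \<and> P j} =
     of_bool (P p) + of_bool (P (p+1)) + of_bool (P (p+2)) + of_bool (P (p+3)) + of_bool (P (p+4))"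
proof -
  have e: "{j. p \<le> j \<and> j \<le> p+4 \<and> P j} = {p, p+1, p+2, p+3, p+4} \<inter> {j. P j}" by auto
  have "card ({p, p+1, p+2, p+3, p+4} \<inter> {j. P j}) = (\<Sum>j\<in>{p, p+1, p+2, p+3, p+4}. of_bool (P j))"
    by (subst sum_of_bool_eq) auto
  also have "\<dots> = of_bool (P p) + of_bool (P (p+1)) + of_bool (P (p+2)) + of_bool (P (p+3)) + of_bool (P (p+4))"
    by simp
  finally show ?thesis using e by simp
qed

lemma card_window4: fixes p :: nat shows
  "card {j. p \<le> j \<and> j \<le> p+3 \<and> P j} =
     of_bool (P p) + of_bool (P (p+1)) + of_bool (P (p+2)) + of_bool (P (p+3))"
proof -
  have e: "{j. p \<le> j \<and> j \<le> p+3 \<and> P j} = {p, p+1, p+2, p+3} \<inter> {j. P j}" by auto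
  have "card ({p, p+1, p+2, p+3} \<inter> {j. P j}) = (\<Sum>j\<in>{p, p+1, p+2, p+3}. of_bool (P j))"
    by (subst sum_of_bool_eq) auto
  also have "\<dots> = of_bool (P p) + of_bool (P (p+1)) + of_bool (P (p+2)) + of_bool (P (p+3))"
    by simp
  finally show ?thesis using e by simp
qed

lemma card_window3: fixes p :: nat shows
  "card {j. p \<le> j \<and> j \<le> p+2 \<and> P j} =
     of_bool (P p) + of_bool (P (p+1)) + of_bool (P (p+2))"
proof -
  have e: "{j. p \<le> j \<and> j \<le> p+2 \<and> P j} = {p, p+1, p+2} \<inter> {j. P j}" by auto
  have "card ({p, p+1, p+2} \<inter> {j. P j}) = (\<Sum>j\<in>{p, p+1, p+2}. of_bool (P j))"
    by (subst sum_of_bool_eq) auto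
  also have "\<dots> = of_bool (P p) + of_bool (P (p+1)) + of_bool (P (p+2))"
    by simp
  finally show ?thesis using e by simp
qed

lemma tbl_trans:
  fixes v0 v1 v2 v3 v4 v5 v6 v7 :: bool
  assumes "v3 \<noteq> v4"
  defines "c \<equiv> (of_bool (\<not>v0 \<and> \<not>v1 \<and> v2 \<and> v3) + of_bool (\<not>v1 \<and> \<not>v2 \<and> v3 \<and> v4) + of_bool (\<not>v2 \<and> \<not>v3 \<and> v4 \<and> v5)
      + of_bool (\<not>v3 \<and> \<not>v4 \<and> v5 \<and> v6) + of_bool (\<not>v4 \<and> \<not>v5 \<and> v6 \<and> v7) :: nat)"
  defines "c' \<equiv> (of_bool (\<not>v0 \<and> \<not>v1 \<and> v2 \<and> v4) + of_bool (\<not>v1 \<and> \<not>v2 \<and> v4 \<and> v3) + of_bool (\<not>v2 \<and> \<not>v4 \<and> v3 \<and> v5)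
      + of_bool (\<not>v4 \<and> \<not>v3 \<and> v5 \<and> v6) + of_bool (\<not>v3 \<and> \<not>v5 \<and> v6 \<and> v7) :: nat)"
  shows "c + c' \<le> 2 \<and> (c = c' \<longrightarrow> c = 0)"
  using assms(1) unfolding c_def c'_def
  by (cases v0; cases v1; cases v2; cases v3; cases v4; cases v5; cases v6; cases v7; simp)

lemma tbl_del:
  fixes v0 v1 v2 v3 v4 v5 v6 :: bool
  assumes "(\<not> v3 \<and> v2) \<or> (v3 \<and> \<not> v4)"
  defines "c \<equiv> (of_bool (\<not>v0 \<and> \<not>v1 \<and> v2 \<and> v3) + of_bool (\<not>v1 \<and> \<not>v2 \<and> v3 \<and> v4) + of_bool (\<not>v2 \<and> \<not>v3 \<and> v4 \<and> v5)
      + of_bool (\<not>v3 \<and> \<not>v4 \<and> v5 \<and> v6) :: nat)"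
  defines "c' \<equiv> (of_bool (\<not>v0 \<and> \<not>v1 \<and> v2 \<and> v4) + of_bool (\<not>v1 \<and> \<not>v2 \<and> v4 \<and> v5) + of_bool (\<not>v2 \<and> \<not>v4 \<and> v5 \<and> v6) :: nat)"
  shows "c \<le> 1 \<and> c' \<le> 1 \<and> (c = c' \<longrightarrow> c = 0)"
  using assms(1) unfolding c_def c'_def
  by (cases v0; cases v1; cases v2; cases v3; cases v4; cases v5; cases v6; simp)

lemma count_window:
  assumes e1lo: "e1 < lo" and lohi: "lo \<le> hi" and hie2: "hi < e2" and oe1: "e1 = 0 \<or> occ z e1" and oe2: "occ z e2"
    and below: "\<And>j. occ z j \<Longrightarrow> j < lo \<Longrightarrow> j \<le> e1"
    and above: "\<And>j. occ z j \<Longrightarrow> hi < j \<Longrightarrow> e2 \<le> j"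
  shows "ell (drop e1 (take e2 z)) = card {j. lo \<le> j \<and> j \<le> hi \<and> occ z j} + 1"
proof -
  define T where "T = {j. occ z j \<and> e1 + 4 \<le> j \<and> j \<le> e2}"
  have img: "(\<lambda>i. i + e1) ` {i. occ (drop e1 (take e2 z)) i} = T"
  proof (rule set_eqI)
    fix j
    show "j \<in> (\<lambda>i. i + e1) ` {i. occ (drop e1 (take e2 z)) i} \<longleftrightarrow> j \<in> T"
    proof
      assume "j \<in> (\<lambda>i. i + e1) ` {i. occ (drop e1 (take e2 z)) i}"
      then obtain i where "occ (drop e1 (take e2 z)) i" "j = i + e1" by auto
      then show "j \<in> T" unfolding T_def occ_drop occ_take by (auto simp: add.commute)
    next
      assume "j \<in> T"
      then have "occ (drop e1 (take e2 z)) (j - e1)" "j = (j - e1) + e1"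
        unfolding T_def occ_drop occ_take by auto
      then show "j \<in> (\<lambda>i. i + e1) ` {i. occ (drop e1 (take e2 z)) i}" by blast
    qed
  qed
  have "card T = card {i. occ (drop e1 (take e2 z)) i}"
    unfolding img[symmetric] by (rule card_image) (simp add: inj_on_def)
  then have ellT: "ell (drop e1 (take e2 z)) = card T"
    unfolding ell_def marker_ends_occ by simp
  define W where "W = {j. lo \<le> j \<and> j \<le> hi \<and> occ z j}"
  have TW: "T = insert e2 W"
  proof (rule set_eqI)
    fix j
    show "j \<in> T \<longleftrightarrow> j \<in> insert e2 W"
    proof
      assume j: "j \<in> T"
      show "j \<in> insert e2 W"
      proof (cases "j < lo")
        case True then show ?thesis using below j unfolding T_def by fastforce
      next
        case False
        show ?thesis
        proof (cases "hi < j")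
          case True then have "e2 \<le> j" using above j unfolding T_def by auto
          then show ?thesis using j unfolding T_def by auto
        next
          case False2: False
          then show ?thesis using False j unfolding T_def W_def by auto
        qed
      qed
    next
      assume j: "j \<in> insert e2 W"
      show "j \<in> T"
      proof (cases "j = e2")
        case True
        have "e1 + 4 \<le> e2"
          using oe1
        proof
          assume "e1 = 0" then show ?thesis using occ_ge4[OF oe2] by simp
        next
          assume o: "occ z e1" have "e1 < e2" using e1lo lohi hie2 by linarith
          then show ?thesis using occ_sep[OF o oe2] by linarith
        qed
        then show ?thesis using True oe2 unfolding T_def by auto
      next
        case False
        then have jW: "lo \<le> j" "j \<le> hi" "occ z j" using j unfolding W_def by auto
        have "e1 + 4 \<le> j"
          using oe1
        proof
          assume "e1 = 0" then show ?thesis using occ_ge4[OF jW(3)] by simp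
        next
          assume "occ z e1" then show ?thesis using occ_sep[OF _ jW(3)] e1lo jW(1) by fastforce
        qed
        then show ?thesis using jW hie2 unfolding T_def by auto
      qed
    qed
  qed
  have "e2 \<notin> W" using hie2 unfolding W_def by auto
  moreover have "finite W" unfolding W_def by auto
  ultimately have "card T = card W + 1" unfolding TW by simp
  then show ?thesis using ellT W_def by simp
qed



lemma e1_ex: assumes "0 < p"
  shows "\<exists>e1. e1 < p \<and> (e1 = 0 \<or> occ x e1) \<and> (\<forall>j. occ x j \<and> j < p \<longrightarrow> j \<le> e1)"
proof -
  define S where "S = insert 0 {j. occ x j \<and> j < p}"
  have fS: "finite S" unfolding S_def by auto
  have "Max S \<in> S" using fS by (intro Max_in) (auto simp: S_def)
  then have a: "Max S = 0 \<or> (occ x (Max S) \<and> Max S < p)" unfolding S_def by auto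
  have b: "\<forall>j. occ x j \<and> j < p \<longrightarrow> j \<le> Max S" using fS unfolding S_def by simp
  have c: "Max S < p" using a assms by auto
  show ?thesis using a b c by blast
qed

lemma e2_ex: assumes "occ x N" "t \<le> N"
  shows "\<exists>e2. t \<le> e2 \<and> occ x e2 \<and> (\<forall>j. occ x j \<and> t \<le> j \<longrightarrow> e2 \<le> j)"
proof -
  have ex: "\<exists>j. occ x j \<and> t \<le> j" using assms by auto
  show ?thesis
    using LeastI_ex[OF ex] Least_le[of "\<lambda>j. occ x j \<and> t \<le> j"] by blast
qed

lemma split3: "e1 \<le> e2 \<Longrightarrow> z = take e1 z @ drop e1 (take e2 z) @ drop e2 z"
  by (metis append.assoc append_take_drop_id min.absorb1 take_take)

lemma bnd_take: "e = 0 \<or> occ x e \<Longrightarrow> bnd (take e x)"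
  unfolding bnd_def using occ_take[of e x e] occ_le[of x e] by (auto simp: min_def)

lemma bnd_mid: "occ z e2 \<Longrightarrow> e1 + 4 \<le> e2 \<Longrightarrow> bnd (drop e1 (take e2 z)) \<and> drop e1 (take e2 z) \<noteq> []"
  unfolding bnd_def using occ_drop[of e1 "take e2 z" "e2 - e1"] occ_take[of e2 z] occ_le[of z e2]
  by auto

lemma xb_swap:
  assumes "1 \<le> p" "p < length x"
  shows "xb (swap_at x p) = (xb x)(p := xb x (p+1), p+1 := xb x p)"
proof
  fix j
  show "xb (swap_at x p) j = ((xb x)(p := xb x (p+1), p+1 := xb x p)) j"
    using assms unfolding xb_def swap_at_def
    by (cases "j = p"; cases "j = p+1"; auto simp: nth_list_update)
qed

lemma arith_p: fixes p :: nat shows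
  "p+1-3 = p-2" "p+1-2 = p-1" "p+1-1 = p" "p+2-3 = p-1" "p+2-2 = p" "p+2-1 = p+1"
  "p+3-3 = p" "p+3-2 = p+1" "p+3-1 = p+2" "p+4-3 = p+1" "p+4-2 = p+2" "p+4-1 = p+3"
  by auto

lemma trans_decomp:
  assumes xC: "x \<in> C" and xl: "length x = N" and ox: "occ x N" and p1: "1 \<le> p" and p5: "p + 5 \<le> N"
    and ne: "x!(p-1) \<noteq> x!p"
    and segD: "\<forall>z\<in>set (segs x). length z \<le> D"
    and hd: "\<forall>z z'. length z \<le> 3*D \<longrightarrow> length z' \<le> 3*D \<longrightarrow> z' \<noteq> z \<longrightarrow> adj_trans_step z z' \<longrightarrow> h z \<noteq> h z'"
  shows "\<exists>A M M' B. gcand m h C (swap_at x p) p x A M M' B"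
proof -
  obtain e1 where e1: "e1 < p" "e1 = 0 \<or> occ x e1" "\<And>j. occ x j \<Longrightarrow> j < p \<Longrightarrow> j \<le> e1"
    using e1_ex[of p x] p1 by auto
  obtain e2 where e2: "p + 5 \<le> e2" "occ x e2" "\<And>j. occ x j \<Longrightarrow> p + 5 \<le> j \<Longrightarrow> e2 \<le> j"
    using e2_ex[OF ox p5] by auto
  have e2N: "e2 \<le> N" using occ_le[OF e2(2)] xl by simp
  define y where "y = swap_at x p"
  have yl: "length y = N" unfolding y_def swap_at_def using xl by simp
  have xby: "xb y = (xb x)(p := xb x (p+1), p+1 := xb x p)"
    unfolding y_def using xb_swap p1 p5 xl by simp
  have occy: "occ y j = occ x j" if "j < p \<or> p + 5 \<le> j" for j
  proof -
    have "j - 3 \<noteq> p \<and> j - 3 \<noteq> p+1 \<and> j - 2 \<noteq> p \<and> j - 2 \<noteq> p+1 \<and> j - 1 \<noteq> p \<and> j - 1 \<noteq> p+1 \<and> j \<noteq> p \<and> j \<noteq> p+1"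
      using that p1 by auto
    then have "pat (xb y) j = pat (xb x) j" unfolding xby pat_def by simp
    then show ?thesis using occ_xb yl xl by metis
  qed
  define A where "A = take e1 x"
  define M where "M = drop e1 (take e2 x)"
  define B where "B = drop e2 x"
  define M' where "M' = drop e1 (take e2 y)"
  have e12: "e1 + 4 \<le> e2" using e1 e2 by linarith
  have xe: "x = A @ M @ B" unfolding A_def M_def B_def using split3[of e1 e2 x] e12 by simp
  have tky: "take e1 y = take e1 x" unfolding y_def swap_at_def using e1 by simp
  have dry: "drop e2 y = drop e2 x" unfolding y_def swap_at_def using e2 p1 by simp
  have ye: "y = A @ M' @ B" unfolding A_def M'_def B_def using split3[of e1 e2 y] e12 tky dry by simp
  have bA: "bnd A" unfolding A_def using bnd_take e1(2) by simp
  have bM: "bnd M" "M \<noteq> []" unfolding M_def using bnd_mid[OF e2(2) e12] by auto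
  have oy2: "occ y e2" using occy e2 by simp
  have bM': "bnd M'" "M' \<noteq> []" unfolding M'_def using bnd_mid[OF oy2 e12] by auto
  have lA: "length A = e1" unfolding A_def using xl e2N e12 by simp
  have lM: "length M = e2 - e1" unfolding M_def using xl e2N e12 by simp
  have lM': "length M' = e2 - e1" unfolding M'_def using yl e2N e12 by simp
  define W where "W = {j. p \<le> j \<and> j \<le> p+4 \<and> occ x j}"
  define W' where "W' = {j. p \<le> j \<and> j \<le> p+4 \<and> occ y j}"
  have ellM: "ell M = card W + 1" unfolding M_def W_def
    by (rule count_window) (use e1 e2 in auto)
  have ellM': "ell M' = card W' + 1" unfolding M'_def W'_def
  proof (rule count_window)
    show "e1 = 0 \<or> occ y e1" using e1 occy by auto
    show "\<And>j. occ y j \<Longrightarrow> j < p \<Longrightarrow> j \<le> e1" using e1 occy by auto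
    show "\<And>j. occ y j \<Longrightarrow> p + 4 < j \<Longrightarrow> e2 \<le> j" using e2 occy by auto
  qed (use e1 e2 oy2 in auto)
  have occx_w: "occ x j = pat (xb x) j" if "j \<le> p + 4" for j using occ_xb xl p5 that by auto
  have occy_w: "occ y j = pat (xb y) j" if "j \<le> p + 4" for j using occ_xb yl p5 that by auto
  have cW: "card W = of_bool (pat (xb x) p) + of_bool (pat (xb x) (p+1)) + of_bool (pat (xb x) (p+2))
      + of_bool (pat (xb x) (p+3)) + of_bool (pat (xb x) (p+4))"
    unfolding W_def card_window5 using occx_w by simp
  have cW': "card W' = of_bool (pat (xb y) p) + of_bool (pat (xb y) (p+1)) + of_bool (pat (xb y) (p+2))
      + of_bool (pat (xb y) (p+3)) + of_bool (pat (xb y) (p+4))"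
    unfolding W'_def card_window5 using occy_w by simp
  have neq: "p - 3 \<noteq> p" "p - 3 \<noteq> p + 1" "p - 2 \<noteq> p" "p - 2 \<noteq> p + 1" "p - 1 \<noteq> p" "p - 1 \<noteq> p + 1"
    using p1 by auto
  have v34: "xb x p \<noteq> xb x (p+1)" using ne p1 p5 xl unfolding xb_def by auto
  define v0 where "v0 = xb x (p-3)"
  define v1 where "v1 = xb x (p-2)"
  define v2 where "v2 = xb x (p-1)"
  define v3 where "v3 = xb x p"
  define v4 where "v4 = xb x (p+1)"
  define v5 where "v5 = xb x (p+2)"
  define v6 where "v6 = xb x (p+3)"
  define v7 where "v7 = xb x (p+4)"
  have px: "pat (xb x) p = (\<not>v0 \<and> \<not>v1 \<and> v2 \<and> v3)"
    "pat (xb x) (p+1) = (\<not>v1 \<and> \<not>v2 \<and> v3 \<and> v4)"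
    "pat (xb x) (p+2) = (\<not>v2 \<and> \<not>v3 \<and> v4 \<and> v5)"
    "pat (xb x) (p+3) = (\<not>v3 \<and> \<not>v4 \<and> v5 \<and> v6)"
    "pat (xb x) (p+4) = (\<not>v4 \<and> \<not>v5 \<and> v6 \<and> v7)"
    unfolding pat_def v0_def v1_def v2_def v3_def v4_def v5_def v6_def v7_def
    by (simp_all only: arith_p)
  have yv: "xb y (p-3) = v0" "xb y (p-2) = v1" "xb y (p-1) = v2" "xb y p = v4" "xb y (p+1) = v3"
    "xb y (p+2) = v5" "xb y (p+3) = v6" "xb y (p+4) = v7"
    unfolding xby v0_def v1_def v2_def v3_def v4_def v5_def v6_def v7_def using neq by auto
  have py: "pat (xb y) p = (\<not>v0 \<and> \<not>v1 \<and> v2 \<and> v4)"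
    "pat (xb y) (p+1) = (\<not>v1 \<and> \<not>v2 \<and> v4 \<and> v3)"
    "pat (xb y) (p+2) = (\<not>v2 \<and> \<not>v4 \<and> v3 \<and> v5)"
    "pat (xb y) (p+3) = (\<not>v4 \<and> \<not>v3 \<and> v5 \<and> v6)"
    "pat (xb y) (p+4) = (\<not>v3 \<and> \<not>v5 \<and> v6 \<and> v7)"
    unfolding pat_def by (simp_all only: arith_p yv)
  have v34': "v3 \<noteq> v4" using v34 unfolding v3_def v4_def .
  have tb: "card W + card W' \<le> 2 \<and> (card W = card W' \<longrightarrow> card W = 0)"
    using tbl_trans[OF v34', of v0 v1 v2 v5 v6 v7] unfolding cW cW' px py .
  have sx: "segs x = segs A @ segs M @ segs B"
    using xe segs_append[OF bA, of "M@B"] segs_append[OF bM(1), of B] by simp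
  have single: "Tm m h M \<noteq> Tm m h M'" if "ell M = ell M'"
  proof -
    have "ell M = 1" using that tb ellM ellM' by simp
    then have "segs M = [M]" using segs_single bM by simp
    then have "M \<in> set (segs x)" using sx by simp
    then have MD: "length M \<le> D" using segD by simp
    define k where "k = p - e1"
    have k: "1 \<le> k" "k < length M" unfolding k_def using e1 e2 lM by auto
    have sw: "M' = swap_at M k"
    proof (rule nth_equalityI)
      show "length M' = length (swap_at M k)" using lM lM' by (simp add: swap_at_def)
    next
      fix i assume "i < length M'"
      then have i: "i < e2 - e1" using lM' by simp
      have Mi: "\<And>j. j < e2 - e1 \<Longrightarrow> M ! j = x ! (e1 + j)" unfolding M_def using e2N xl by simp
      have M'i: "M' ! i = y ! (e1 + i)" unfolding M'_def using i e2N yl by simp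
      have ek: "e1 + k = p" "e1 + (k - 1) = p - 1" unfolding k_def using e1 p1 by auto
      have lx: "p < length x" using p5 xl by simp
      have Mk: "M ! k = x ! p" "M ! (k-1) = x ! (p-1)" using Mi[of k] Mi[of "k-1"] k lM ek by auto
      show "M' ! i = swap_at M k ! i"
      proof (cases "i = k")
        case True
        then show ?thesis unfolding M'i y_def swap_at_def using ek lx k Mk by (simp add: nth_list_update)
      next
        case False
        show ?thesis
        proof (cases "i = k - 1")
          case True
          then show ?thesis unfolding M'i y_def swap_at_def using ek lx k Mk False by (simp add: nth_list_update)
        next
          case F2: False
          have "e1 + i \<noteq> p" "e1 + i \<noteq> p - 1" using False F2 ek k by auto
          then show ?thesis unfolding M'i y_def swap_at_def using Mi[of i] i False F2 lx
            by (simp add: nth_list_update)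
        qed
      qed
    qed
    have "M' ! (k-1) \<noteq> M ! (k-1)"
      using sw k ne unfolding swap_at_def M_def k_def using e1 e2N xl p1 by (auto simp: nth_list_update)
    then have "M' \<noteq> M" by auto
    moreover have "adj_trans_step M M'" unfolding adj_trans_step_def using sw k by auto
    moreover have "length M \<le> 3*D" "length M' \<le> 3*D" using MD lM lM' by auto
    ultimately have "h M \<noteq> h M'" using hd by metis
    then show ?thesis unfolding Tm_def using lM lM' by simp
  qed
  have "gcand m h C y p x A M M' B"
    unfolding gcand_def using xC xe ye bA bM bM' lA lM lM' e1 e2 ellM ellM' tb single by auto
  then show ?thesis unfolding y_def by blast
qed

lemma xb_del:
  assumes "1 \<le> p" "p \<le> length x"
  shows "xb (del_at x p) = (\<lambda>j. xb x (if j < p then j else j+1))"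
proof
  fix j
  have ly: "length (del_at x p) = length x - 1" unfolding del_at_def using assms by simp
  show "xb (del_at x p) j = xb x (if j < p then j else j+1)"
  proof (cases "j = 0")
    case True then show ?thesis using assms by (simp add: xb_def)
  next
    case False
    show ?thesis
    proof (cases "j < p")
      case True
      then show ?thesis using False assms ly unfolding xb_def del_at_def by (auto simp: nth_append)
    next
      case F2: False
      show ?thesis
      proof (cases "j \<le> length x - 1")
        case True
        have "del_at x p ! (j-1) = x ! j" unfolding del_at_def using True F2 False assms
          by (auto simp: nth_append)
        then show ?thesis using True F2 False assms ly unfolding xb_def by auto
      next
        case F3: False
        then show ?thesis using F2 ly unfolding xb_def by auto
      qed
    qed
  qed
qed

lemma del_decomp:
  assumes xC: "x \<in> C" and xl: "length x = N" and ox: "occ x N" and p1: "1 \<le> p" and p4: "p + 4 \<le> N"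
    and canon: "(\<not> x!(p-1) \<and> (p = 1 \<or> x!(p-2))) \<or> (x!(p-1) \<and> \<not> x!p)"
    and segD: "\<forall>z\<in>set (segs x). length z \<le> D"
    and hh: "\<forall>z. length z \<le> 3*D \<longrightarrow> h z < m"
  shows "\<exists>A M M' B. gcand m h C (del_at x p) p x A M M' B"
proof -
  obtain e1 where e1: "e1 < p" "e1 = 0 \<or> occ x e1" "\<And>j. occ x j \<Longrightarrow> j < p \<Longrightarrow> j \<le> e1"
    using e1_ex[of p x] p1 by auto
  obtain e2 where e2: "p + 4 \<le> e2" "occ x e2" "\<And>j. occ x j \<Longrightarrow> p + 4 \<le> j \<Longrightarrow> e2 \<le> j"
    using e2_ex[OF ox p4] by auto
  have e2N: "e2 \<le> N" using occ_le[OF e2(2)] xl by simp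
  define y where "y = del_at x p"
  have yl: "length y = N - 1" unfolding y_def del_at_def using xl p1 p4 by simp
  have xby: "xb y = (\<lambda>j. xb x (if j < p then j else j+1))"
    unfolding y_def using xb_del p1 p4 xl by simp
  have occy1: "occ y j = occ x j" if "j < p" for j
  proof -
    have "j-3 < p" "j-2 < p" "j-1 < p" using that by auto
    then have "pat (xb y) j = pat (xb x) j" unfolding xby pat_def using that by simp
    moreover have "j \<le> N - 1" using that p4 by linarith
    ultimately show ?thesis using occ_xb[of y j] occ_xb[of x j] yl xl that p4 by simp
  qed
  have occy2: "occ y j = occ x (j+1)" if "p + 3 \<le> j" for j
  proof -
    have e: "j - 3 + 1 = j + 1 - 3" "j - 2 + 1 = j + 1 - 2" "j - 1 + 1 = j + 1 - 1"
      "\<not> j - 3 < p" "\<not> j - 2 < p" "\<not> j - 1 < p" "\<not> j < p"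
      using that by auto
    have "pat (xb y) j = pat (xb x) (j+1)" unfolding xby pat_def using that by (simp only: e if_False)
    then show ?thesis using occ_xb[of y j] occ_xb[of x "j+1"] yl xl that p4 by auto
  qed
  define A where "A = take e1 x"
  define M where "M = drop e1 (take e2 x)"
  define B where "B = drop e2 x"
  define M' where "M' = drop e1 (take (e2-1) y)"
  have e12: "e1 + 4 \<le> e2" using e1 e2 by linarith
  have xe: "x = A @ M @ B" unfolding A_def M_def B_def using split3[of e1 e2 x] e12 by simp
  have tky: "take e1 y = take e1 x" unfolding y_def del_at_def using e1(1) p4 xl by (simp add: min_def; linarith)
  have dry: "drop (e2-1) y = drop e2 x"
  proof -
    have "drop (e2-1) y = drop (e2 - 1 - (p-1)) (drop p x)" unfolding y_def del_at_def
      using e1 e2 xl p4 by simp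
    also have "\<dots> = drop e2 x" using e2 p1 by simp
    finally show ?thesis .
  qed
  have ye: "y = A @ M' @ B" unfolding A_def M'_def B_def using split3[of e1 "e2-1" y] e12 tky dry by simp
  have bA: "bnd A" unfolding A_def using bnd_take e1(2) by simp
  have bM: "bnd M" "M \<noteq> []" unfolding M_def using bnd_mid[OF e2(2) e12] by auto
  have oy2: "occ y (e2-1)" using occy2[of "e2-1"] e2 by simp
  have e12': "e1 + 4 \<le> e2 - 1" using e1 e2 by linarith
  have bM': "bnd M'" "M' \<noteq> []" unfolding M'_def using bnd_mid[OF oy2 e12'] by auto
  have lA: "length A = e1" unfolding A_def using xl e2N e12 by simp
  have lM: "length M = e2 - e1" unfolding M_def using xl e2N e12 by simp
  have lM': "length M' = e2 - 1 - e1" unfolding M'_def using yl e2N e12 by simp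
  define W where "W = {j. p \<le> j \<and> j \<le> p+3 \<and> occ x j}"
  define W' where "W' = {j. p \<le> j \<and> j \<le> p+2 \<and> occ y j}"
  have ellM: "ell M = card W + 1" unfolding M_def W_def
    by (rule count_window) (use e1 e2 in auto)
  have ellM': "ell M' = card W' + 1" unfolding M'_def W'_def
  proof (rule count_window)
    show "e1 = 0 \<or> occ y e1" using e1 occy1 by auto
    show "\<And>j. occ y j \<Longrightarrow> j < p \<Longrightarrow> j \<le> e1" using e1 occy1 by auto
    show "\<And>j. occ y j \<Longrightarrow> p + 2 < j \<Longrightarrow> e2 - 1 \<le> j"
    proof -
      fix j assume "occ y j" "p + 2 < j"
      then have "occ x (j+1)" using occy2 by auto
      then show "e2 - 1 \<le> j" using e2(3)[of "j+1"] \<open>p + 2 < j\<close> by auto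
    qed
  qed (use e1 e2 oy2 in auto)
  have occx_w: "occ x j = pat (xb x) j" if "j \<le> p + 3" for j using occ_xb xl p4 that by auto
  have occy_w: "occ y j = pat (xb y) j" if "j \<le> p + 2" for j using occ_xb yl p4 that by auto
  have cW: "card W = of_bool (pat (xb x) p) + of_bool (pat (xb x) (p+1)) + of_bool (pat (xb x) (p+2))
      + of_bool (pat (xb x) (p+3))"
    unfolding W_def card_window4 using occx_w by simp
  have cW': "card W' = of_bool (pat (xb y) p) + of_bool (pat (xb y) (p+1)) + of_bool (pat (xb y) (p+2))"
    unfolding W'_def card_window3 using occy_w by simp
  define v0 where "v0 = xb x (p-3)"
  define v1 where "v1 = xb x (p-2)"
  define v2 where "v2 = xb x (p-1)"
  define v3 where "v3 = xb x p"
  define v4 where "v4 = xb x (p+1)"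
  define v5 where "v5 = xb x (p+2)"
  define v6 where "v6 = xb x (p+3)"
  have px: "pat (xb x) p = (\<not>v0 \<and> \<not>v1 \<and> v2 \<and> v3)"
    "pat (xb x) (p+1) = (\<not>v1 \<and> \<not>v2 \<and> v3 \<and> v4)"
    "pat (xb x) (p+2) = (\<not>v2 \<and> \<not>v3 \<and> v4 \<and> v5)"
    "pat (xb x) (p+3) = (\<not>v3 \<and> \<not>v4 \<and> v5 \<and> v6)"
    unfolding pat_def v0_def v1_def v2_def v3_def v4_def v5_def v6_def
    by (simp_all only: arith_p)
  have lt: "p - 3 < p" "p - 2 < p" "p - 1 < p" using p1 by auto
  have yv: "xb y (p-3) = v0" "xb y (p-2) = v1" "xb y (p-1) = v2" "xb y p = v4" "xb y (p+1) = v5"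
    "xb y (p+2) = v6"
    unfolding xby v0_def v1_def v2_def v3_def v4_def v5_def v6_def
    by (rule arg_cong[where f="xb x"], insert p1, simp)+
  have py: "pat (xb y) p = (\<not>v0 \<and> \<not>v1 \<and> v2 \<and> v4)"
    "pat (xb y) (p+1) = (\<not>v1 \<and> \<not>v2 \<and> v4 \<and> v5)"
    "pat (xb y) (p+2) = (\<not>v2 \<and> \<not>v4 \<and> v5 \<and> v6)"
    unfolding pat_def by (simp_all only: arith_p yv)
  have cv: "(\<not> v3 \<and> v2) \<or> (v3 \<and> \<not> v4)"
  proof -
    have "v3 = x!(p-1)" "v4 = x!p" unfolding v3_def v4_def xb_def using p1 p4 xl by auto
    moreover have "v2 = (p = 1 \<or> x!(p-2))"
    proof (cases "p = 1")
      case True then show ?thesis unfolding v2_def xb_def by simp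
    next
      case False
      then have "p - 1 \<noteq> 0" "p - 1 \<le> length x" "p - 1 - 1 = p - 2" using p1 p4 xl by auto
      then show ?thesis unfolding v2_def xb_def using False by simp
    qed
    ultimately show ?thesis using canon by auto
  qed
  have tb: "card W \<le> 1 \<and> card W' \<le> 1 \<and> (card W = card W' \<longrightarrow> card W = 0)"
    using tbl_del[OF cv, of v0 v1 v5 v6] unfolding cW cW' px py .
  have sx: "segs x = segs A @ segs M @ segs B"
    using xe segs_append[OF bA, of "M@B"] segs_append[OF bM(1), of B] by simp
  have single: "Tm m h M \<noteq> Tm m h M'" if "ell M = ell M'"
  proof -
    have "ell M = 1" using that tb ellM ellM' by simp
    then have "segs M = [M]" using segs_single bM by simp
    then have "M \<in> set (segs x)" using sx by simp
    then have MD: "length M \<le> D" using segD by simp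
    then have "length M' \<le> 3*D" using lM lM' by simp
    then have "h M' < m" using hh by simp
    moreover have "length M = length M' + 1" using lM lM' e12 by simp
    ultimately show ?thesis unfolding Tm_def by (simp add: algebra_simps)
  qed
  have "gcand m h C y p x A M M' B"
    unfolding gcand_def using xC xe ye bA bM bM' lA lM lM' e1 e2 e12 ellM ellM' tb single by auto
  then show ?thesis unfolding y_def by blast
qed



lemma del_run: assumes "1 \<le> q" "q + 1 \<le> length x" "x!(q-1) = x!q"
  shows "del_at x q = del_at x (q+1)"
proof -
  have "take (Suc (q-1)) x = take (q-1) x @ [x!(q-1)]" using assms
    by (intro take_Suc_conv_app_nth) simp
  moreover have "Suc (q-1) = q" using assms by simp
  ultimately have "take q x = take (q-1) x @ [x!(q-1)]" by simp
  moreover have "drop q x = x!q # drop (q+1) x" using assms by (simp add: Cons_nth_drop_Suc)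
  ultimately show ?thesis unfolding del_at_def using assms by simp
qed

definition canon :: "nat \<Rightarrow> bool list \<Rightarrow> nat \<Rightarrow> bool" where
  "canon N x q \<longleftrightarrow> (\<not> x!(q-1) \<and> (q = 1 \<or> x!(q-2))) \<or> (x!(q-1) \<and> (q = N \<or> \<not> x!q))"

lemma canon_false: "1 \<le> p \<Longrightarrow> p \<le> length x \<Longrightarrow> \<not> x!(p-1) \<Longrightarrow>
   \<exists>q. 1 \<le> q \<and> q \<le> length x \<and> del_at x q = del_at x p \<and> canon (length x) x q"
proof (induction p rule: less_induct)
  case (less p)
  show ?case
  proof (cases "p = 1 \<or> x!(p-2)")
    case True then show ?thesis using less.prems unfolding canon_def by blast
  next
    case False
    have e: "p - 1 - 1 = p - 2" by auto
    have f: "\<not> x!(p-1-1)" "2 \<le> p" unfolding e using less.prems False by auto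
    obtain q where q: "1 \<le> q \<and> q \<le> length x \<and> del_at x q = del_at x (p-1) \<and> canon (length x) x q"
    proof -
      have h1: "p - 1 < p" "1 \<le> p - 1" "p - 1 \<le> length x" using f less.prems by auto
      show ?thesis using less.IH[OF h1 f(1)] that by blast
    qed
    have "del_at x (p-1) = del_at x (p-1+1)" using del_run[of "p-1" x] f less.prems by auto
    then show ?thesis using q f by auto
  qed
qed

lemma canon_true: "1 \<le> p \<Longrightarrow> p \<le> length x \<Longrightarrow> x!(p-1) \<Longrightarrow>
   \<exists>q. 1 \<le> q \<and> q \<le> length x \<and> del_at x q = del_at x p \<and> canon (length x) x q"
proof (induction "length x - p" arbitrary: p rule: less_induct)
  case less
  show ?case
  proof (cases "p = length x \<or> \<not> x!p")
    case True then show ?thesis using less.prems unfolding canon_def by blast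
  next
    case False
    then have f: "x!(p+1-1)" "p + 1 \<le> length x" using less.prems by auto
    have lt: "length x - (p+1) < length x - p" using f(2) by auto
    obtain q where q: "1 \<le> q \<and> q \<le> length x \<and> del_at x q = del_at x (p+1) \<and> canon (length x) x q"
      using less.hyps[OF lt, of] f by (metis le_add2)
    have "del_at x p = del_at x (p+1)" using del_run[of p x] f less.prems by auto
    then show ?thesis using q by auto
  qed
qed

lemma canon_ex: "1 \<le> p \<Longrightarrow> p \<le> length x \<Longrightarrow>
   \<exists>q. 1 \<le> q \<and> q \<le> length x \<and> del_at x q = del_at x p \<and> canon (length x) x q"
  using canon_false canon_true by blast

lemma swap_ne: assumes "swap_at x j \<noteq> x" shows "x!(j-1) \<noteq> x!j"
proof
  assume eq: "x!(j-1) = x!j"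
  have "swap_at x j = x[j-1 := x!(j-1), j := x!j]" unfolding swap_at_def using eq by simp
  also have "\<dots> = x" by simp
  finally show False using assms by simp
qed

lemma card_spread:
  fixes R :: "nat set"
  assumes "R \<subseteq> {..N}" "\<forall>a\<in>R. \<forall>b\<in>R. b \<le> a + c"
  shows "card R \<le> c + 1"
proof (cases "R = {}")
  case False
  have fR: "finite R" using assms(1) finite_subset by blast
  have "R \<subseteq> {Min R..Min R + c}" using assms(2) Min_in[OF fR False] Min_le[OF fR] by auto
  then have "card R \<le> card {Min R..Min R + c}" by (rule card_mono[rotated]) simp
  then show ?thesis by simp
qed simp

lemma card_union_le: "finite A \<Longrightarrow> finite B \<Longrightarrow> card (A \<union> B) \<le> card A + card B"
  by (simp add: card_Un_le)



lemma trans_card: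
  assumes g: "goodC N D m h C"
    and code: "\<forall>x\<in>C. \<forall>x'\<in>C. hash_mset h x = hash_mset h x' \<or> mset_symdiff_size (hash_mset h x) (hash_mset h x') \<ge> 10"
    and fC: "\<forall>x\<in>C. Fl m h (segs x) mod fm = s0"
    and fmb: "7*N*m + (18*D+18)*m < fm"
    and hd: "\<forall>z z'. length z \<le> 3*D \<longrightarrow> length z' \<le> 3*D \<longrightarrow> z' \<noteq> z \<longrightarrow> adj_trans_step z z' \<longrightarrow> h z \<noteq> h z'"
    and oc: "\<forall>x\<in>C. occ x N"
  shows "card {j. 1 \<le> j \<and> j < N \<and> (\<exists>x\<in>C. swap_at x j = y \<and> swap_at x j \<noteq> x)} \<le> 78*D + 115"
proof -
  define T where "T = {j. 1 \<le> j \<and> j < N \<and> (\<exists>x\<in>C. swap_at x j = y \<and> swap_at x j \<noteq> x)}"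
  define R where "R = {j\<in>T. j + 5 \<le> N}"
  have TR: "T \<subseteq> {N-5..N} \<union> R" unfolding R_def T_def by auto
  have cand: "\<exists>x A M M' B. gcand m h C y j x A M M' B" if jR: "j \<in> R" for j
  proof -
    obtain x where x: "x \<in> C" "swap_at x j = y" "swap_at x j \<noteq> x" "1 \<le> j" "j + 5 \<le> N"
      using jR unfolding R_def T_def by auto
    have xl: "length x = N" "\<forall>z\<in>set (segs x). length z \<le> D" using g x(1) unfolding goodC_def by auto
    have ox: "occ x N" using oc x(1) by auto
    obtain A M M' B where "gcand m h C (swap_at x j) j x A M M' B"
      using trans_decomp[OF x(1) xl(1) ox x(4) x(5) swap_ne[OF x(3)] xl(2) hd] by blast
    then show ?thesis using x(2) by blast
  qed
  have "\<forall>a\<in>R. \<forall>b\<in>R. b \<le> a + (78*D + 108)"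
  proof (intro ballI)
    fix a b assume "a \<in> R" "b \<in> R"
    then obtain x1 A1 M1 M1' B1 x2 A2 M2 M2' B2 where
      "gcand m h C y a x1 A1 M1 M1' B1" "gcand m h C y b x2 A2 M2 M2' B2" using cand by metis
    from pair_bound[OF g code fC fmb this] show "b \<le> a + (78*D + 108)" by simp
  qed
  moreover have "R \<subseteq> {..N}" unfolding R_def T_def by auto
  ultimately have cR: "card R \<le> 78*D + 109" using card_spread[of R N] by fastforce
  have fR: "finite R" unfolding R_def T_def by (rule finite_subset[of _ "{..N}"]) auto
  have "card T \<le> card ({N-5..N} \<union> R)" using TR fR by (intro card_mono) auto
  also have "\<dots> \<le> card {N-5..N} + card R" using fR by (intro card_Un_le)
  also have "card {N-5..N} \<le> 6" by simp
  finally show ?thesis using cR unfolding T_def by linarith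
qed

lemma del_card:
  assumes g: "goodC N D m h C"
    and code: "\<forall>x\<in>C. \<forall>x'\<in>C. hash_mset h x = hash_mset h x' \<or> mset_symdiff_size (hash_mset h x) (hash_mset h x') \<ge> 10"
    and fC: "\<forall>x\<in>C. Fl m h (segs x) mod fm = s0"
    and fmb: "7*N*m + (18*D+18)*m < fm"
    and oc: "\<forall>x\<in>C. occ x N"
  shows "card {q. 1 \<le> q \<and> q \<le> N \<and> (\<exists>x\<in>C. del_at x q = y \<and> canon N x q)} \<le> 78*D + 115"
proof -
  define T where "T = {q. 1 \<le> q \<and> q \<le> N \<and> (\<exists>x\<in>C. del_at x q = y \<and> canon N x q)}"
  define R where "R = {j\<in>T. j + 4 \<le> N}"
  have TR: "T \<subseteq> {N-5..N} \<union> R" unfolding R_def T_def by auto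
  have hh: "\<forall>z. length z \<le> 3*D \<longrightarrow> h z < m" using g unfolding goodC_def by auto
  have cand: "\<exists>x A M M' B. gcand m h C y j x A M M' B" if jR: "j \<in> R" for j
  proof -
    obtain x where x: "x \<in> C" "del_at x j = y" "canon N x j" "1 \<le> j" "j + 4 \<le> N"
      using jR unfolding R_def T_def by auto
    have xl: "length x = N" "\<forall>z\<in>set (segs x). length z \<le> D" using g x(1) unfolding goodC_def by auto
    have cn: "(\<not> x!(j-1) \<and> (j = 1 \<or> x!(j-2))) \<or> (x!(j-1) \<and> \<not> x!j)"
      using x(3,5) unfolding canon_def by auto
    have ox: "occ x N" using oc x(1) by auto
    obtain A M M' B where "gcand m h C (del_at x j) j x A M M' B"
      using del_decomp[OF x(1) xl(1) ox x(4) x(5) cn xl(2) hh] by blast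
    then show ?thesis using x(2) by blast
  qed
  have "\<forall>a\<in>R. \<forall>b\<in>R. b \<le> a + (78*D + 108)"
  proof (intro ballI)
    fix a b assume "a \<in> R" "b \<in> R"
    then obtain x1 A1 M1 M1' B1 x2 A2 M2 M2' B2 where
      "gcand m h C y a x1 A1 M1 M1' B1" "gcand m h C y b x2 A2 M2 M2' B2" using cand by metis
    from pair_bound[OF g code fC fmb this] show "b \<le> a + (78*D + 108)" by simp
  qed
  moreover have "R \<subseteq> {..N}" unfolding R_def T_def by auto
  ultimately have cR: "card R \<le> 78*D + 109" using card_spread[of R N] by fastforce
  have fR: "finite R" unfolding R_def T_def by (rule finite_subset[of _ "{..N}"]) auto
  have "card T \<le> card ({N-5..N} \<union> R)" using TR fR by (intro card_mono) auto
  also have "\<dots> \<le> card {N-5..N} + card R" using fR by (intro card_Un_le)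
  also have "card {N-5..N} \<le> 6" by simp
  finally show ?thesis using cR unfolding T_def by linarith
qed



theorem theorem4:
  fixes n k :: nat and h :: "bool list \<Rightarrow> nat" and C :: "bool list set"
  assumes "n = 2 ^ k"
    and "good_hash n h"
    and "is_code n h C"
  shows "\<exists>W :: bool list \<Rightarrow> nat set.
     (\<forall>y. (length y = n - 1 \<or> length y = n) \<longrightarrow>
          W y \<subseteq> {1..n} \<and> real (card (W y)) \<le> 10 ^ 10 * (log 2 (real n)) ^ 4) \<and>
     (\<forall>x \<in> C.
        (\<forall>p \<in> {1..n}. \<exists>q \<in> W (del_at x p). del_at x q = del_at x p) \<and>
        (\<forall>j. 1 \<le> j \<and> j < n \<and> swap_at x j \<noteq> x \<longrightarrow> j \<in> W (swap_at x j)))"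
proof -
  from assms(3) obtain s0 s1 s2 where Csub: "C \<subseteq> Cprime n h s0 s1 s2"
    and code: "\<forall>x\<in>C. \<forall>x'\<in>C. hash_mset h x = hash_mset h x' \<or> mset_symdiff_size (hash_mset h x) (hash_mset h x') \<ge> 10"
    unfolding is_code_def by blast
  define D where "D = 50 + 1000*k"
  have logn: "log 2 (real n) = real k" using assms(1) by simp
  have DeltaD: "Delta n = real D" unfolding Delta_def D_def logn by simp
  define m where "m = mnat n"
  have mr: "mreal n = real (1000 * D^2)" unfolding mreal_def DeltaD by simp
  have m_eq: "m = 1000 * D^2" unfolding m_def mnat_def mr by (simp only: floor_of_nat nat_int)
  have mreal_m: "mreal n = real m" using mr m_eq by simp
  have fm_eq: "fmod n = 10*n*D*m + 1"
  proof -
    have "10 * real n * Delta n * mreal n + 1 = real (10*n*D*m + 1)" unfolding DeltaD mreal_m by simp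
    then show ?thesis unfolding fmod_def by (simp only: floor_of_nat nat_int)
  qed
  define W where "W = (\<lambda>y. if length y = n then {j. 1 \<le> j \<and> j < n \<and> (\<exists>x\<in>C. swap_at x j = y \<and> swap_at x j \<noteq> x)}
      else {q. 1 \<le> q \<and> q \<le> n \<and> (\<exists>x\<in>C. del_at x q = y \<and> canon n x q)})"
  have xC: "length x = n \<and> 4 \<le> n \<and> drop (n-4) x = marker \<and> f_sk n h x = s0
      \<and> (\<forall>z\<in>set (segs x). real (length z) \<le> Delta n)" if "x \<in> C" for x
    using Csub that unfolding Cprime_def by auto
  have bound: "card (W y) \<le> 78*D + 115 \<and> (C \<noteq> {} \<longrightarrow> 2 \<le> k) \<and> (C = {} \<longrightarrow> W y = {})" for y
  proof (cases "C = {}")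
    case True then show ?thesis unfolding W_def by simp
  next
    case False
    then obtain x0 where "x0 \<in> C" by auto
    then have n4: "4 \<le> n" using xC by auto
    have k2: "2 \<le> k"
    proof (rule ccontr)
      assume "\<not> 2 \<le> k"
      then have "k \<le> 1" by simp
      then have "k = 0 \<or> k = 1" by auto
      then have "n \<le> 2" using assms(1) by auto
      then show False using n4 by simp
    qed
    have D50: "50 \<le> D" unfolding D_def by simp
    have m0: "0 < m" unfolding m_eq using D50 by simp
    have gh: "\<forall>z. real (length z) \<le> 3 * Delta n \<longrightarrow> real (h z) \<le> mreal n - 1"
      and gh2: "\<forall>z z'. real (length z) \<le> 3 * Delta n \<longrightarrow> real (length z') \<le> 3 * Delta n \<longrightarrow> z' \<noteq> z \<longrightarrow>
        (le2_adj_trans z z' \<or> le2_subst z z' \<or> le1_del_ins z z') \<longrightarrow> h z \<noteq> h z'"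
      using assms(2) unfolding good_hash_def by auto
    have hh: "\<forall>z. length z \<le> 3*D \<longrightarrow> h z < m"
    proof (intro allI impI)
      fix z :: "bool list" assume "length z \<le> 3*D"
      then have "real (length z) \<le> 3 * Delta n" unfolding DeltaD by simp
      then have "real (h z) \<le> real m - 1" using gh mreal_m by simp
      then show "h z < m" by linarith
    qed
    have hd: "\<forall>z z'. length z \<le> 3*D \<longrightarrow> length z' \<le> 3*D \<longrightarrow> z' \<noteq> z \<longrightarrow> adj_trans_step z z' \<longrightarrow> h z \<noteq> h z'"
    proof (intro allI impI)
      fix z z' :: "bool list" assume a: "length z \<le> 3*D" "length z' \<le> 3*D" "z' \<noteq> z" "adj_trans_step z z'"
      have "real (length z) \<le> 3 * Delta n" "real (length z') \<le> 3 * Delta n" using a unfolding DeltaD by auto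
      moreover have "le2_adj_trans z z'" using a(4) unfolding le2_adj_trans_def by simp
      ultimately show "h z \<noteq> h z'" using gh2 a(3) by blast
    qed
    have oc: "\<forall>x\<in>C. occ x n"
    proof
      fix x assume "x \<in> C"
      then have "length x = n" "4 \<le> n" "drop (n-4) x = marker" using xC by auto
      then show "occ x n" using occ_iff[of n x] by simp
    qed
    have g: "goodC n D m h C" unfolding goodC_def
    proof (intro conjI ballI allI impI)
      show "0 < m" by (rule m0)
      show "\<And>z. length z \<le> 3 * D \<Longrightarrow> h z < m" using hh by simp
      fix x assume x: "x \<in> C"
      show "length x = n" using xC x by auto
      show "bnd x" using oc x unfolding bnd_def using xC[OF x] by auto
      fix z assume "z \<in> set (segs x)"
      then have "real (length z) \<le> real D" using xC[OF x] DeltaD by auto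
      then show "length z \<le> D" by simp
    qed
    have fC: "\<forall>x\<in>C. Fl m h (segs x) mod fmod n = s0"
      using xC f_sk_Fl unfolding m_def by auto
    have fmb: "7*n*m + (18*D+18)*m < fmod n"
    proof -
      have e1: "7*n \<le> n*D" using D50 by simp
      have e2: "4*D \<le> n*D" using n4 by simp
      have "7*n + 18*D + 18 \<le> 10*(n*D)" using e1 e2 D50 by linarith
      then have "(7*n + 18*D + 18)*m \<le> 10*(n*D)*m" by (rule mult_le_mono1)
      moreover have "7*n*m + (18*D+18)*m = (7*n + 18*D + 18)*m" "10*n*D*m = 10*(n*D)*m"
        by (simp_all add: algebra_simps)
      ultimately have "7*n*m + (18*D+18)*m \<le> 10*n*D*m" by linarith
      then show ?thesis unfolding fm_eq by simp
    qed
    have "card (W y) \<le> 78*D + 115"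
    proof (cases "length y = n")
      case True
      then show ?thesis unfolding W_def using trans_card[OF g code fC fmb hd oc, of y] by simp
    next
      case False
      then show ?thesis unfolding W_def using del_card[OF g code fC fmb oc, of y] by simp
    qed
    then show ?thesis using k2 False by simp
  qed
  show ?thesis
  proof (rule exI[of _ W], intro conjI allI impI ballI)
    fix y :: "bool list" assume "length y = n - 1 \<or> length y = n"
    show "W y \<subseteq> {1..n}" unfolding W_def by auto
    show "real (card (W y)) \<le> 10 ^ 10 * (log 2 (real n)) ^ 4"
    proof (cases "C = {}")
      case True
      then have "W y = {}" using bound by simp
      then show ?thesis by simp
    next
      case False
      then have k2: "2 \<le> k" and cb: "card (W y) \<le> 78*D + 115" using bound by auto
      have "k \<le> k^4" using k2 by (simp add: self_le_power)
      then have "10000000000 * k \<le> 10000000000 * k^4" by simp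
      moreover have "78 * D + 115 = 78000*k + 4015" unfolding D_def by simp
      ultimately have "card (W y) \<le> 10000000000 * k^4" using cb k2 by linarith
      then have "card (W y) \<le> 10^10 * k^4" by simp
      then have "real (card (W y)) \<le> real (10^10 * k^4)" by (simp only: of_nat_le_iff)
      then show ?thesis unfolding logn by simp
    qed
  next
    fix x assume x: "x \<in> C"
    have xl: "length x = n" "4 \<le> n" using xC[OF x] by auto
    {
      fix p assume p: "p \<in> {1..n}"
      obtain q where q: "1 \<le> q" "q \<le> length x" "del_at x q = del_at x p" "canon (length x) x q"
        using canon_ex[of p x] p xl by auto
      have "length (del_at x p) \<noteq> n" unfolding del_at_def using p xl by auto
      then have "q \<in> W (del_at x p)" unfolding W_def using q xl x by auto
      then show "\<exists>q \<in> W (del_at x p). del_at x q = del_at x p" using q by auto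
    }
    {
      fix j assume j: "1 \<le> j \<and> j < n \<and> swap_at x j \<noteq> x"
      have "length (swap_at x j) = n" unfolding swap_at_def using xl by simp
      then show "j \<in> W (swap_at x j)" unfolding W_def using j x by auto
    }
  qed
qed


end
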